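(* Let $n,d,e,m$ be such that the Padé matrix $P_T$ of $\mathcal{T}^n_{d,e,m}\subset\mathbb{P}^N$ is square, i.e. $\binom{m+n}{n}-\binom{d+n}{n}=\binom{e+n}{n}$. If $\mathcal{T}^n_{d,e,m}$ is a non-defective hypersurface of $\mathbb{P}^N$, then $P_T$ is non-singular for a general choice of the coefficients, i.e. $\det(P_T)\not\equiv 0$ as a polynomial in the $c_\gamma$.
   Context: Notation: $x=(x_1,\dots,x_n)$, multi-indices $\gamma\in\mathbb{N}^n$, $x^\gamma=x_1^{\gamma_1}\cdots x_n^{\gamma_n}$, $|\gamma|=\gamma_1+\dots+\gamma_n$. Taylor variety: for $P,Q\in\mathbb{C}[x]$ with $P(0)=Q(0)=1$, $\deg P\le d$, $\deg Q\le e$, write the Taylor expansion at the origin $P/Q=1+\sum_{0<|\gamma|\le m}c_\gamma x^\gamma+(\text{terms of order}\ge m+1)$. This defines a map $\psi:\mathbb{C}^{\binom{d+n}{n}-1}\times\mathbb{C}^{\binom{e+n}{n}-1}\to\mathbb{C}^{\binom{n+m}{n}-1}$, $(P,Q)\mapsto(c_\gamma)_{0<|\gamma|\le m}$. The Taylor variety $\mathcal{T}^n_{d,e,m}$ is the projective closure of the image of $\psi$ in $\mathbb{P}^N$, $N=\binom{n+m}{n}-1$, with homogeneous coordinates $[c_\gamma]_{0\le|\gamma|\le m}$. Its expected dimension is $\min\{\binom{d+n}{n}+\binom{e+n}{n}-2,\binom{m+n}{n}-1\}$; it is non-defective if its dimension equals the expected dimension. Padé matrix: for the generic polynomial $T=\sum_{0\le|\gamma|\le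 m}c_\gamma x^\gamma$, let $\varphi_T:\mathbb{C}[x]_{\le e}\to\operatorname{Span}\{x^\rho: d+1\le|\rho|\le m\}$ send $Q$ to the part of $QT$ supported on monomials of degree between $d+1$ and $m$. The Padé matrix $P_T$ is the matrix of $\varphi_T$ in monomial bases (columns indexed by monomials $x^\sigma$, $|\sigma|\le e$, rows by monomials $x^\rho$, $d+1\le|\rho|\le m$); its $(\rho,\sigma)$ entry is $c_{\rho-\sigma}$ if $\sigma\le\rho$ componentwise and $0$ otherwise. A point $T$ lies in $\mathcal{T}^n_{d,e,m}$ (on the open part) iff $\varphi_T$ has nontrivial kernel. *)

theory Defs
  imports Complex_Main "HOL-Combinatorics.Permutations" "HOL-Library.Extended_Nat"
begin

(* Multi-indices gamma in N^n are functions nat => nat vanishing from index n on. *)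
type_synonym mi = "nat \<Rightarrow> nat"

definition mdeg :: "nat \<Rightarrow> mi \<Rightarrow> nat" where
  "mdeg n \<gamma> = (\<Sum>i<n. \<gamma> i)"

definition MI :: "nat \<Rightarrow> nat \<Rightarrow> mi set" where
  "MI n k = {\<gamma>. (\<forall>i\<ge>n. \<gamma> i = 0) \<and> mdeg n \<gamma> \<le> k}"

definition MIrange :: "nat \<Rightarrow> nat \<Rightarrow> nat \<Rightarrow> mi set" where
  "MIrange n a b = {\<gamma>. (\<forall>i\<ge>n. \<gamma> i = 0) \<and> a \<le> mdeg n \<gamma> \<and> mdeg n \<gamma> \<le> b}"

(* Affine space C^I with coordinates indexed by the finite set I *)
definition amb :: "mi set \<Rightarrow> (mi \<Rightarrow> complex) set" where
  "amb I = {c. \<forall>\<gamma>. \<gamma> \<notin> I \<longrightarrow> c \<gamma> = 0}"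

inductive_set polyfun :: "mi set \<Rightarrow> ((mi \<Rightarrow> complex) \<Rightarrow> complex) set" for I where
  pconst: "(\<lambda>c. a) \<in> polyfun I"
| pvar: "\<gamma> \<in> I \<Longrightarrow> (\<lambda>c. c \<gamma>) \<in> polyfun I"
| padd: "f \<in> polyfun I \<Longrightarrow> g \<in> polyfun I \<Longrightarrow> (\<lambda>c. f c + g c) \<in> polyfun I"
| pmul: "f \<in> polyfun I \<Longrightarrow> g \<in> polyfun I \<Longrightarrow> (\<lambda>c. f c * g c) \<in> polyfun I"

definition zclosed :: "mi set \<Rightarrow> (mi \<Rightarrow> complex) set \<Rightarrow> bool" where
  "zclosed I V \<longleftrightarrow> (\<exists>S \<subseteq> polyfun I. V = {c \<in> amb I. \<forall>f\<in>S. f c = 0})"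

definition zclosure :: "mi set \<Rightarrow> (mi \<Rightarrow> complex) set \<Rightarrow> (mi \<Rightarrow> complex) set" where
  "zclosure I X = \<Inter>{V. zclosed I V \<and> X \<subseteq> V}"

definition zirred :: "mi set \<Rightarrow> (mi \<Rightarrow> complex) set \<Rightarrow> bool" where
  "zirred I Z \<longleftrightarrow> zclosed I Z \<and> Z \<noteq> {} \<and>
     (\<forall>A B. zclosed I A \<and> zclosed I B \<and> Z = A \<union> B \<longrightarrow> Z = A \<or> Z = B)"

definition zdim :: "mi set \<Rightarrow> (mi \<Rightarrow> complex) set \<Rightarrow> enat" where
  "zdim I V = Sup {enat k | k. \<exists>Z :: nat \<Rightarrow> (mi \<Rightarrow> complex) set.
      (\<forall>i\<le>k. zirred I (Z i) \<and> Z i \<subseteq> V) \<and> (\<forall>i<k. Z i \<subset> Z (Suc i))}"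

(* Image of psi: truncated Taylor coefficients of P/Q, with c_0 = 1 included.
   c is the truncation to degree <= m of the power series P/Q, i.e. the unique c
   supported in degrees <= m with Q * c = P modulo terms of degree > m. *)
definition taylor_image :: "nat \<Rightarrow> nat \<Rightarrow> nat \<Rightarrow> nat \<Rightarrow> (mi \<Rightarrow> complex) set" where
  "taylor_image n d e m = {c. \<exists>p q :: mi \<Rightarrow> complex.
      p (\<lambda>_. 0) = 1 \<and> q (\<lambda>_. 0) = 1 \<and>
      (\<forall>\<gamma>. \<gamma> \<notin> MI n d \<longrightarrow> p \<gamma> = 0) \<and>
      (\<forall>\<gamma>. \<gamma> \<notin> MI n e \<longrightarrow> q \<gamma> = 0) \<and>
      (\<forall>\<gamma>. \<gamma> \<notin> MI n m \<longrightarrow> c \<gamma> = 0) \<and>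
      (\<forall>\<gamma>\<in>MI n m. (\<Sum>\<sigma>\<in>{\<sigma>\<in>MI n e. \<forall>i. \<sigma> i \<le> \<gamma> i}.
                         q \<sigma> * c (\<lambda>i. \<gamma> i - \<sigma> i)) = p \<gamma>)}"

definition taylor_cone :: "nat \<Rightarrow> nat \<Rightarrow> nat \<Rightarrow> nat \<Rightarrow> (mi \<Rightarrow> complex) set" where
  "taylor_cone n d e m = {c. \<exists>t\<in>taylor_image n d e m. \<exists>a::complex. c = (\<lambda>\<gamma>. a * t \<gamma>)}"

(* dimension of the projective closure T^n_{d,e,m} in P^N = dim of its affine cone - 1 *)
definition taylor_dim :: "nat \<Rightarrow> nat \<Rightarrow> nat \<Rightarrow> nat \<Rightarrow> enat" where
  "taylor_dim n d e m = zdim (MI n m) (zclosure (MI n m) (taylor_cone n d e m)) - 1"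

definition bigN :: "nat \<Rightarrow> nat \<Rightarrow> nat" where
  "bigN n m = (m + n choose n) - 1"

definition expected_dim :: "nat \<Rightarrow> nat \<Rightarrow> nat \<Rightarrow> nat \<Rightarrow> nat" where
  "expected_dim n d e m = min ((d + n choose n) + (e + n choose n) - 2) (bigN n m)"

definition pade :: "(mi \<Rightarrow> complex) \<Rightarrow> mi \<Rightarrow> mi \<Rightarrow> complex" where
  "pade c \<rho> \<sigma> = (if \<forall>i. \<sigma> i \<le> \<rho> i then c (\<lambda>i. \<rho> i - \<sigma> i) else 0)"

definition det_on :: "'a set \<Rightarrow> ('a \<Rightarrow> 'a \<Rightarrow> complex) \<Rightarrow> complex" where
  "det_on S A = (\<Sum>p | p permutes S. of_int (sign p) * (\<Prod>i\<in>S. A i (p i)))"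

end

theory Submission
  imports Defs "HOL-Library.Function_Algebras" "Jordan_Normal_Form.Determinant"
begin

inductive gp :: "'b set \<Rightarrow> nat \<Rightarrow> (('b \<Rightarrow> complex) \<Rightarrow> complex) \<Rightarrow> bool" for J where
  gconst: "gp J k (\<lambda>x. a)"
| gvar: "j \<in> J \<Longrightarrow> 1 \<le> k \<Longrightarrow> gp J k (\<lambda>x. x j)"
| gadd: "gp J k f \<Longrightarrow> gp J k g \<Longrightarrow> gp J k (\<lambda>x. f x + g x)"
| gmul: "gp J a f \<Longrightarrow> gp J b g \<Longrightarrow> a + b \<le> k \<Longrightarrow> gp J k (\<lambda>x. f x * g x)"

lemma gp_mono: "gp J a f \<Longrightarrow> a \<le> b \<Longrightarrow> gp J b f"
proof (induction arbitrary: b rule: gp.induct)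
  case (gconst k a) then show ?case using gp.gconst by blast
next
  case (gvar j k) then show ?case using gp.gvar[of j J b] by simp
next
  case (gadd k f g) then show ?case using gp.gadd by blast
next
  case (gmul a f b' g k)
  then show ?case using gp.gmul[of J a f b' g b] by simp
qed

lemma gp_scale: "gp J k f \<Longrightarrow> gp J k (\<lambda>x. c * f x)"
proof -
  assume "gp J k f"
  then show ?thesis using gp.gmul[of J 0 "\<lambda>x. c" k f k] gp.gconst[of J 0 c] by simp
qed

lemma gp_diff: "gp J k f \<Longrightarrow> gp J k g \<Longrightarrow> gp J k (\<lambda>x. f x - g x)"
proof -
  assume a: "gp J k f" "gp J k g"
  show ?thesis using gp.gadd[OF a(1) gp_scale[OF a(2), of "-1"]] by simp
qed

lemma gp_sum: "finite S \<Longrightarrow> (\<And>s. s \<in> S \<Longrightarrow> gp J k (f s)) \<Longrightarrow> gp J k (\<lambda>x. \<Sum>s\<in>S. f s x)"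
proof (induction S rule: finite_induct)
  case empty
  then show ?case using gp.gconst[of J k 0] by simp
next
  case (insert s S)
  then show ?case using gp.gadd[of J k "f s" "\<lambda>x. \<Sum>s\<in>S. f s x"] by simp
qed

lemma polyfun_gp: "f \<in> polyfun I \<Longrightarrow> \<exists>k. gp I k f"
proof (induction rule: polyfun.induct)
  case (pconst a) then show ?case using gp.gconst[of I 0 a] by (intro exI)
next
  case (pvar \<gamma>) then show ?case using gp.gvar[of \<gamma> I 1] by (intro exI) simp
next
  case (padd f g)
  then obtain a b where ab: "gp I a f" "gp I b g" by blast
  have "gp I (a+b) f" using gp_mono[OF ab(1), of "a+b"] by simp
  moreover have "gp I (a+b) g" using gp_mono[OF ab(2), of "a+b"] by simp
  ultimately show ?case using gp.gadd[of I "a+b" f g] by (intro exI)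
next
  case (pmul f g)
  then obtain a b where ab: "gp I a f" "gp I b g" by blast
  show ?case using gp.gmul[OF ab, of "a+b"] by (intro exI) simp
qed

lemma polyfun_sum: "finite S \<Longrightarrow> (\<And>s. s \<in> S \<Longrightarrow> f s \<in> polyfun I) \<Longrightarrow> (\<lambda>x. \<Sum>s\<in>S. f s x) \<in> polyfun I"
proof (induction S rule: finite_induct)
  case empty
  then show ?case using polyfun.pconst[of 0 I] by simp
next
  case (insert s S)
  then show ?case using polyfun.padd[of "f s" I "\<lambda>x. \<Sum>s\<in>S. f s x"] by simp
qed

lemma polyfun_scale: "f \<in> polyfun I \<Longrightarrow> (\<lambda>x. c * f x) \<in> polyfun I"
  using polyfun.pmul[OF polyfun.pconst[of c I], of f] by simp

lemma gp_comp:
  assumes "gp I D F" "\<And>\<gamma>. \<gamma> \<in> I \<Longrightarrow> gp J \<delta> (\<lambda>x. \<Phi> x \<gamma>)"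
  shows "gp J (D * \<delta>) (\<lambda>x. F (\<Phi> x))"
  using assms(1)
proof (induction rule: gp.induct)
  case (gconst k a) then show ?case using gp.gconst[of J "k*\<delta>" a] by simp
next
  case (gvar j k)
  have "\<delta> \<le> k * \<delta>" using gvar(2) by simp
  then show ?case using assms(2)[OF gvar(1)] gp_mono[of J \<delta> _ "k*\<delta>"] by simp
next
  case (gadd k f g) then show ?case using gp.gadd[of J "k*\<delta>"] by simp
next
  case (gmul a f b g k)
  then show ?case using gp.gmul[of J "a*\<delta>" _ "b*\<delta>" _ "k*\<delta>"]
    by (simp add: add_mult_distrib[symmetric])
qed

interpretation FV: vector_space "(\<lambda>(a::complex) (f::('b \<Rightarrow> complex) \<Rightarrow> complex) x. a * f x)"
  by unfold_locales (auto simp: algebra_simps fun_eq_iff)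

definition mmono :: "'b set \<Rightarrow> ('b \<Rightarrow> nat) \<Rightarrow> ('b \<Rightarrow> complex) \<Rightarrow> complex" where
  "mmono J \<alpha> = (\<lambda>x. \<Prod>j\<in>J. x j ^ \<alpha> j)"

definition Mon :: "'b set \<Rightarrow> nat \<Rightarrow> (('b \<Rightarrow> complex) \<Rightarrow> complex) set" where
  "Mon J K = {mmono J \<alpha> | \<alpha>. (\<Sum>j\<in>J. \<alpha> j) \<le> K}"

lemma Mon_mono: "a \<le> b \<Longrightarrow> Mon J a \<subseteq> Mon J b"
  unfolding Mon_def by auto

lemma mmono_mult: "finite J \<Longrightarrow> (\<lambda>x. mmono J \<alpha> x * mmono J \<beta> x) = mmono J (\<lambda>j. \<alpha> j + \<beta> j)"
  unfolding mmono_def by (auto simp: fun_eq_iff power_add prod.distrib)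

lemma Mon_mult: "finite J \<Longrightarrow> f \<in> Mon J a \<Longrightarrow> g \<in> Mon J b \<Longrightarrow> (\<lambda>x. f x * g x) \<in> Mon J (a + b)"
proof -
  assume J: "finite J" and "f \<in> Mon J a" "g \<in> Mon J b"
  then obtain \<alpha> \<beta> where f: "f = mmono J \<alpha>" "(\<Sum>j\<in>J. \<alpha> j) \<le> a"
    and g: "g = mmono J \<beta>" "(\<Sum>j\<in>J. \<beta> j) \<le> b" unfolding Mon_def by auto
  have "(\<lambda>x. f x * g x) = mmono J (\<lambda>j. \<alpha> j + \<beta> j)" using f g mmono_mult[OF J] by simp
  moreover have "(\<Sum>j\<in>J. \<alpha> j + \<beta> j) \<le> a + b" using f g by (simp add: sum.distrib)
  ultimately show ?thesis unfolding Mon_def by blast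
qed

lemma subspace_mult_right:
  "FV.subspace {h. (\<lambda>x. h x * g x) \<in> FV.span S}"
  unfolding FV.subspace_def
proof (intro conjI ballI allI)
  show "0 \<in> {h. (\<lambda>x. h x * g x) \<in> FV.span S}"
    using FV.span_zero by (simp add: zero_fun_def)
next
  fix x y assume "x \<in> {h. (\<lambda>x. h x * g x) \<in> FV.span S}" "y \<in> {h. (\<lambda>x. h x * g x) \<in> FV.span S}"
  then have "(\<lambda>xa. x xa * g xa) + (\<lambda>xa. y xa * g xa) \<in> FV.span S"
    using FV.span_add by auto
  then show "x + y \<in> {h. (\<lambda>x. h x * g x) \<in> FV.span S}"
    by (simp add: plus_fun_def algebra_simps)
next
  fix c x assume "x \<in> {h. (\<lambda>x. h x * g x) \<in> FV.span S}"
  then have "(\<lambda>xa. c * (x xa * g xa)) \<in> FV.span S"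
    using FV.span_scale by auto
  then show "(\<lambda>xa. c * x xa) \<in> {h. (\<lambda>x. h x * g x) \<in> FV.span S}"
    by (simp add: algebra_simps)
qed

lemma subspace_mult_left:
  "FV.subspace {h. (\<lambda>x. f x * h x) \<in> FV.span S}"
  using subspace_mult_right[of f S] by (simp add: mult.commute)

lemma span_mult_aux:
  assumes "finite J" "f \<in> FV.span (Mon J a)" "g \<in> Mon J b"
  shows "(\<lambda>x. f x * g x) \<in> FV.span (Mon J (a + b))"
  using FV.span_induct[OF assms(2) subspace_mult_right[of g "Mon J (a + b)"]]
    Mon_mult[OF assms(1) _ assms(3)] FV.span_base by auto

lemma span_mult:
  assumes "finite J" "f \<in> FV.span (Mon J a)" "g \<in> FV.span (Mon J b)"
  shows "(\<lambda>x. f x * g x) \<in> FV.span (Mon J (a + b))"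
  using FV.span_induct[OF assms(3) subspace_mult_left[of f "Mon J (a + b)"]]
    span_mult_aux[OF assms(1,2)] by auto

lemma gp_span: assumes "finite J" shows "gp J K f \<Longrightarrow> f \<in> FV.span (Mon J K)"
proof (induction rule: gp.induct)
  case (gconst k a)
  have "mmono J (\<lambda>_. 0) \<in> Mon J k" unfolding Mon_def by auto
  moreover have "mmono J (\<lambda>_. 0) = (\<lambda>x. 1)" unfolding mmono_def by auto
  ultimately have "(\<lambda>x. 1) \<in> FV.span (Mon J k)" using FV.span_base by metis
  from FV.span_scale[OF this, of a] show ?case by simp
next
  case (gvar j k)
  have "mmono J (\<lambda>i. if i = j then 1 else 0) \<in> Mon J k" unfolding Mon_def
    using gvar assms by (auto simp: sum.delta intro!: exI[of _ "\<lambda>i. if i = j then 1 else 0"])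
  moreover have "mmono J (\<lambda>i. if i = j then 1 else 0) = (\<lambda>x. x j)" unfolding mmono_def
  proof
    fix x
    have "(\<Prod>i\<in>J. x i ^ (if i = j then 1 else 0)) = (\<Prod>i\<in>J. if i = j then x i else 1)"
      by (rule prod.cong) auto
    also have "\<dots> = x j" using gvar assms by (simp add: prod.delta)
    finally show "(\<Prod>i\<in>J. x i ^ (if i = j then 1 else 0)) = x j" .
  qed
  ultimately show ?case using FV.span_base by metis
next
  case (gadd k f g)
  then have "f + g \<in> FV.span (Mon J k)" using FV.span_add by blast
  then show ?case by (simp add: plus_fun_def)
next
  case (gmul a f b g k)
  then have "(\<lambda>x. f x * g x) \<in> FV.span (Mon J (a + b))" using span_mult assms by blast
  then show ?case using FV.span_mono[OF Mon_mono[OF gmul(3)]] by blast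
qed

lemma Mon_card: assumes "finite J" shows "finite (Mon J K) \<and> card (Mon J K) \<le> (K+1) ^ card J"
proof -
  have sub: "Mon J K \<subseteq> mmono J ` (PiE J (\<lambda>_. {..K}))"
  proof
    fix f assume "f \<in> Mon J K"
    then obtain \<alpha> where f: "f = mmono J \<alpha>" and s: "(\<Sum>j\<in>J. \<alpha> j) \<le> K" unfolding Mon_def by auto
    have "\<alpha> j \<le> K" if "j \<in> J" for j
      using member_le_sum[of j J \<alpha>] assms s that by simp
    then have "restrict \<alpha> J \<in> PiE J (\<lambda>_. {..K})" by auto
    moreover have "mmono J (restrict \<alpha> J) = mmono J \<alpha>" unfolding mmono_def by auto
    ultimately show "f \<in> mmono J ` (PiE J (\<lambda>_. {..K}))" using f by (metis image_eqI)
  qed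
  have fin: "finite (PiE J (\<lambda>_. {..K}))" using assms by (simp add: finite_PiE)
  have "card (Mon J K) \<le> card (mmono J ` (PiE J (\<lambda>_. {..K})))"
    using sub fin by (simp add: card_mono)
  also have "\<dots> \<le> card (PiE J (\<lambda>_. {..K}))" using fin card_image_le by blast
  also have "\<dots> = (K+1) ^ card J" using assms by (simp add: card_PiE)
  finally show ?thesis using sub fin finite_subset by blast
qed

definition indep_on :: "'a set \<Rightarrow> ('a \<Rightarrow> complex) list \<Rightarrow> bool" where
  "indep_on Z fs \<longleftrightarrow> (\<forall>a::nat \<Rightarrow> complex. (\<forall>x\<in>Z. (\<Sum>i<length fs. a i * (fs!i) x) = 0) \<longrightarrow> (\<forall>i<length fs. a i = 0))"

lemma sum_fun_apply': "(\<Sum>v\<in>t. (f v :: 'a \<Rightarrow> 'b::comm_monoid_add)) x = (\<Sum>v\<in>t. f v x)"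
  by (induction t rule: infinite_finite_induct) (auto simp: zero_fun_def plus_fun_def)

lemma indep_UNIV_bound:
  assumes ind0: "indep_on UNIV gs" and sp: "set gs \<subseteq> FV.span M" and M: "finite M"
  shows "length gs \<le> card M"
proof -
  have dist: "distinct gs"
  proof (rule ccontr)
    assume "\<not> distinct gs"
    then obtain i j where ij: "i < length gs" "j < length gs" "i \<noteq> j" "gs!i = gs!j"
      by (auto simp: distinct_conv_nth)
    define a where "a = (\<lambda>k. if k = i then 1 else if k = j then -1 else (0::complex))"
    have "(\<Sum>k<length gs. a k * (gs!k) x) = 0" for x
    proof -
      have "(\<Sum>k<length gs. a k * (gs!k) x) = (\<Sum>k\<in>{i,j}. a k * (gs!k) x)"
        by (rule sum.mono_neutral_right) (auto simp: a_def ij)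
      also have "\<dots> = 0" using ij by (simp add: a_def)
      finally show ?thesis .
    qed
    then have "a i = 0" using ind0 ij unfolding indep_on_def by blast
    then show False by (simp add: a_def)
  qed
  have bij: "bij_betw (nth gs) {..<length gs} (set gs)"
    using dist by (simp add: bij_betw_nth)
  have ind: "FV.independent (set gs)"
  proof
    assume "FV.dependent (set gs)"
    then obtain t u where t: "finite t" "t \<subseteq> set gs" "(\<Sum>v\<in>t. (\<lambda>x. u v * v x)) = 0" "\<exists>v\<in>t. u v \<noteq> 0"
      unfolding FV.dependent_explicit by blast
    define a where "a = (\<lambda>k. if gs!k \<in> t then u (gs!k) else 0)"
    have "(\<Sum>k<length gs. a k * (gs!k) x) = 0" for x
    proof -
      have "(\<Sum>k<length gs. a k * (gs!k) x) = (\<Sum>v\<in>set gs. (if v \<in> t then u v else 0) * v x)"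
        unfolding a_def using sum.reindex_bij_betw[OF bij, of "\<lambda>v. (if v \<in> t then u v else 0) * v x"]
        by simp
      also have "\<dots> = (\<Sum>v\<in>set gs. if v \<in> t then u v * v x else 0)"
        by (rule sum.cong) auto
      also have "\<dots> = (\<Sum>v\<in>set gs \<inter> t. u v * v x)"
        by (simp add: sum.inter_restrict)
      also have "set gs \<inter> t = t" using t by blast
      also have "(\<Sum>v\<in>t. u v * v x) = (\<Sum>v\<in>t. (\<lambda>x. u v * v x)) x"
        by (simp add: sum_fun_apply')
      also have "\<dots> = 0" using t by (simp add: zero_fun_def)
      finally show ?thesis .
    qed
    then have all0: "\<forall>k<length gs. a k = 0" using ind0 unfolding indep_on_def by blast
    from t obtain v where v: "v \<in> t" "u v \<noteq> 0" by blast
    then have "v \<in> set gs" using t(2) by blast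
    then obtain k where k: "k < length gs" "gs!k = v" by (auto simp: in_set_conv_nth)
    then have "a k = u v" using v by (simp add: a_def)
    then show False using all0 k v by simp
  qed
  have "card (set gs) \<le> card M" using FV.independent_span_bound[OF M ind sp] by simp
  then show ?thesis using distinct_card[OF dist] by simp
qed

lemma zero_set_closed: "F \<in> polyfun I \<Longrightarrow> zclosed I {c \<in> amb I. F c = 0}"
  unfolding zclosed_def by (rule exI[of _ "{F}"]) auto

lemma UB:
  assumes J: "finite J" and amb: "\<And>x. \<Phi> x \<in> amb I" and deg: "\<And>\<gamma>. \<gamma> \<in> I \<Longrightarrow> gp J \<delta> (\<lambda>x. \<Phi> x \<gamma>)"
    and Z: "Z \<subseteq> zclosure I (range \<Phi>)" and fs: "set fs \<subseteq> polyfun I" "\<And>f. f \<in> set fs \<Longrightarrow> gp I D f"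
    and ind: "indep_on Z fs"
  shows "length fs \<le> (D*\<delta>+1) ^ card J"
proof -
  define gs where "gs = map (\<lambda>f x. f (\<Phi> x)) fs"
  have "indep_on UNIV gs" unfolding indep_on_def
  proof (rule allI, rule impI)
    fix a :: "nat \<Rightarrow> complex" assume h: "\<forall>x\<in>UNIV. (\<Sum>i<length gs. a i * (gs!i) x) = 0"
    define F where "F = (\<lambda>c. \<Sum>i<length fs. a i * (fs!i) c)"
    have "(\<lambda>c. a i * (fs!i) c) \<in> polyfun I" if "i < length fs" for i
    proof -
      have "fs!i \<in> polyfun I" using that fs(1) nth_mem by auto
      then show ?thesis by (rule polyfun_scale)
    qed
    then have "F \<in> polyfun I" unfolding F_def
      using polyfun_sum[of "{..<length fs}" "\<lambda>i c. a i * (fs!i) c" I] by simp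
    then have cl: "zclosed I {c \<in> amb I. F c = 0}" by (rule zero_set_closed)
    have "range \<Phi> \<subseteq> {c \<in> amb I. F c = 0}" using h amb by (auto simp: F_def gs_def)
    then have "zclosure I (range \<Phi>) \<subseteq> {c \<in> amb I. F c = 0}" unfolding zclosure_def using cl by blast
    then have "\<forall>x\<in>Z. (\<Sum>i<length fs. a i * (fs!i) x) = 0" using Z by (auto simp: F_def)
    then show "\<forall>i<length gs. a i = 0" using ind unfolding indep_on_def gs_def by simp
  qed
  moreover have "set gs \<subseteq> FV.span (Mon J (D*\<delta>))"
  proof
    fix g assume "g \<in> set gs"
    then obtain f where f: "f \<in> set fs" "g = (\<lambda>x. f (\<Phi> x))" by (auto simp: gs_def)
    have "gp J (D*\<delta>) g" using gp_comp[OF fs(2)[OF f(1)] deg] f(2) by simp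
    then show "g \<in> FV.span (Mon J (D*\<delta>))" using gp_span[OF J] by blast
  qed
  ultimately have "length gs \<le> card (Mon J (D*\<delta>))" using indep_UNIV_bound Mon_card[OF J] by blast
  then show ?thesis using Mon_card[OF J, of "D*\<delta>"] by (simp add: gs_def)
qed

lemma zclosed_amb: "zclosed I Z \<Longrightarrow> Z \<subseteq> amb I"
  unfolding zclosed_def by auto

lemma zclosed_Int: "zclosed I A \<Longrightarrow> zclosed I B \<Longrightarrow> zclosed I (A \<inter> B)"
proof -
  assume "zclosed I A" "zclosed I B"
  then obtain SA SB where "SA \<subseteq> polyfun I" "A = {c \<in> amb I. \<forall>f\<in>SA. f c = 0}"
    "SB \<subseteq> polyfun I" "B = {c \<in> amb I. \<forall>f\<in>SB. f c = 0}" unfolding zclosed_def by blast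
  then show ?thesis unfolding zclosed_def by (intro exI[of _ "SA \<union> SB"]) auto
qed

lemma zclosed_Un: "zclosed I A \<Longrightarrow> zclosed I B \<Longrightarrow> zclosed I (A \<union> B)"
proof -
  assume "zclosed I A" "zclosed I B"
  then obtain SA SB where SA: "SA \<subseteq> polyfun I" "A = {c \<in> amb I. \<forall>f\<in>SA. f c = 0}"
    and SB: "SB \<subseteq> polyfun I" "B = {c \<in> amb I. \<forall>f\<in>SB. f c = 0}" unfolding zclosed_def by blast
  define S where "S = {(\<lambda>c. f c * g c) | f g. f \<in> SA \<and> g \<in> SB}"
  have "S \<subseteq> polyfun I"
  proof
    fix k assume "k \<in> S"
    then obtain f g where "k = (\<lambda>c. f c * g c)" "f \<in> SA" "g \<in> SB" unfolding S_def by blast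
    then show "k \<in> polyfun I" using SA(1) SB(1) polyfun.pmul[of f I g] by auto
  qed
  moreover have "A \<union> B = {c \<in> amb I. \<forall>f\<in>S. f c = 0}"
  proof
    show "A \<union> B \<subseteq> {c \<in> amb I. \<forall>f\<in>S. f c = 0}"
    proof
      fix c assume c: "c \<in> A \<union> B"
      have "k c = 0" if "k \<in> S" for k
      proof -
        obtain f g where "k = (\<lambda>c. f c * g c)" "f \<in> SA" "g \<in> SB" using \<open>k \<in> S\<close> unfolding S_def by blast
        then show ?thesis using c SA(2) SB(2) by auto
      qed
      moreover have "c \<in> amb I" using c SA(2) SB(2) by auto
      ultimately show "c \<in> {c \<in> amb I. \<forall>f\<in>S. f c = 0}" by blast
    qed
  next
    show "{c \<in> amb I. \<forall>f\<in>S. f c = 0} \<subseteq> A \<union> B"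
    proof
      fix c assume c: "c \<in> {c \<in> amb I. \<forall>f\<in>S. f c = 0}"
      show "c \<in> A \<union> B"
      proof (cases "\<forall>f\<in>SA. f c = 0")
        case True then show ?thesis using c SA(2) by auto
      next
        case False
        then obtain f where f: "f \<in> SA" "f c \<noteq> 0" by blast
        have "\<forall>g\<in>SB. g c = 0"
        proof
          fix g assume g: "g \<in> SB"
          have "(\<lambda>c. f c * g c) \<in> S" unfolding S_def using f(1) g by blast
          then have "f c * g c = 0" using c by fastforce
          then show "g c = 0" using f by simp
        qed
        then show ?thesis using c SB(2) by auto
      qed
    qed
  qed
  ultimately show ?thesis unfolding zclosed_def by (intro exI[of _ S] conjI)
qed

lemma zclosed_empty: "zclosed I {}"
  unfolding zclosed_def using polyfun.pconst[of 1 I] by (intro exI[of _ "{\<lambda>c. 1}"]) auto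

lemma zclosed_UN: "finite F \<Longrightarrow> (\<And>s. s \<in> F \<Longrightarrow> zclosed I (V s)) \<Longrightarrow> zclosed I (\<Union>s\<in>F. V s)"
proof (induction F rule: finite_induct)
  case empty then show ?case using zclosed_empty by simp
next
  case (insert s F) then show ?case using zclosed_Un[of I "V s" "\<Union>s\<in>F. V s"] by simp
qed

lemma zclosed_Inter:
  assumes "\<And>V. V \<in> \<V> \<Longrightarrow> zclosed I V" "\<V> \<noteq> {}"
  shows "zclosed I (\<Inter>\<V>)"
proof -
  have "\<forall>V\<in>\<V>. \<exists>S. S \<subseteq> polyfun I \<and> V = {c \<in> amb I. \<forall>f\<in>S. f c = 0}"
    using assms(1) unfolding zclosed_def by blast
  from bchoice[OF this] obtain SS where SS0: "\<forall>V\<in>\<V>. SS V \<subseteq> polyfun I \<and> V = {c \<in> amb I. \<forall>f\<in>SS V. f c = 0}"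
    by blast
  then have SS: "\<And>V. V \<in> \<V> \<Longrightarrow> SS V \<subseteq> polyfun I \<and> V = {c \<in> amb I. \<forall>f\<in>SS V. f c = 0}"
    by blast
  have "\<Inter>\<V> = {c \<in> amb I. \<forall>f\<in>(\<Union>V\<in>\<V>. SS V). f c = 0}"
  proof
    show "\<Inter>\<V> \<subseteq> {c \<in> amb I. \<forall>f\<in>(\<Union>V\<in>\<V>. SS V). f c = 0}"
    proof
      fix c assume c: "c \<in> \<Inter>\<V>"
      from assms(2) obtain V0 where "V0 \<in> \<V>" by blast
      then have "c \<in> amb I" using c SS[of V0] by auto
      moreover have "\<forall>f\<in>(\<Union>V\<in>\<V>. SS V). f c = 0"
      proof
        fix f assume "f \<in> (\<Union>V\<in>\<V>. SS V)"
        then obtain V where "V \<in> \<V>" "f \<in> SS V" by blast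
        then show "f c = 0" using c SS[of V] by auto
      qed
      ultimately show "c \<in> {c \<in> amb I. \<forall>f\<in>(\<Union>V\<in>\<V>. SS V). f c = 0}" by blast
    qed
  next
    show "{c \<in> amb I. \<forall>f\<in>(\<Union>V\<in>\<V>. SS V). f c = 0} \<subseteq> \<Inter>\<V>"
    proof
      fix c assume c: "c \<in> {c \<in> amb I. \<forall>f\<in>(\<Union>V\<in>\<V>. SS V). f c = 0}"
      show "c \<in> \<Inter>\<V>"
      proof
        fix V assume V: "V \<in> \<V>"
        then show "c \<in> V" using c SS[OF V] by auto
      qed
    qed
  qed
  moreover have "(\<Union>V\<in>\<V>. SS V) \<subseteq> polyfun I" using SS0 by blast
  ultimately show ?thesis unfolding zclosed_def by (intro exI[of _ "\<Union>V\<in>\<V>. SS V"] conjI)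
qed

lemma zclosure_closed: "X \<subseteq> amb I \<Longrightarrow> zclosed I (zclosure I X)"
proof -
  assume X: "X \<subseteq> amb I"
  have "zclosed I (amb I)" unfolding zclosed_def by (intro exI[of _ "{}"]) auto
  then have ne: "{V. zclosed I V \<and> X \<subseteq> V} \<noteq> {}" using X by blast
  show ?thesis unfolding zclosure_def
    by (rule zclosed_Inter) (use ne in auto)
qed

lemma zclosure_least: "zclosed I W \<Longrightarrow> X \<subseteq> W \<Longrightarrow> zclosure I X \<subseteq> W"
  unfolding zclosure_def by blast

lemma zirred_sub_UN:
  assumes irr: "zirred I Z"
  shows "finite F \<Longrightarrow> (\<And>s. s \<in> F \<Longrightarrow> zclosed I (V s)) \<Longrightarrow> Z \<subseteq> (\<Union>s\<in>F. V s) \<Longrightarrow> \<exists>s\<in>F. Z \<subseteq> V s"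
proof (induction F rule: finite_induct)
  case empty then show ?case using irr unfolding zirred_def by simp
next
  case (insert s F)
  have cZ: "zclosed I Z" using irr unfolding zirred_def by blast
  have c1: "zclosed I (Z \<inter> V s)" using zclosed_Int[OF cZ insert(4)] by simp
  have c2: "zclosed I (Z \<inter> (\<Union>s\<in>F. V s))" using zclosed_Int[OF cZ zclosed_UN[OF insert(1)]] insert(4) by simp
  have "Z = (Z \<inter> V s) \<union> (Z \<inter> (\<Union>s\<in>F. V s))" using insert(5) by blast
  then have "Z = Z \<inter> V s \<or> Z = Z \<inter> (\<Union>s\<in>F. V s)" using irr c1 c2 unfolding zirred_def by blast
  then show ?case
  proof
    assume "Z = Z \<inter> V s"
    then have "Z \<subseteq> V s" by (metis Int_lower2)
    then show ?thesis by blast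
  next
    assume "Z = Z \<inter> (\<Union>s\<in>F. V s)"
    then have "Z \<subseteq> (\<Union>s\<in>F. V s)" by (metis Int_lower2)
    then have "\<exists>s\<in>F. Z \<subseteq> V s" using insert.IH insert.prems(1) by simp
    then show ?thesis by blast
  qed
qed

lemma zirred_prod:
  assumes irr: "zirred I Z" and h: "h \<in> polyfun I" and G: "G \<in> polyfun I"
    and prod0: "\<forall>c\<in>Z. h c * G c = 0" and hz: "\<exists>z\<in>Z. h z \<noteq> 0"
  shows "\<forall>c\<in>Z. G c = 0"
proof -
  have cZ: "zclosed I Z" using irr unfolding zirred_def by blast
  have ZA: "Z \<subseteq> amb I" using zclosed_amb[OF cZ] .
  have c1: "zclosed I (Z \<inter> {c \<in> amb I. h c = 0})" using zclosed_Int[OF cZ zero_set_closed[OF h]] .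
  have c2: "zclosed I (Z \<inter> {c \<in> amb I. G c = 0})" using zclosed_Int[OF cZ zero_set_closed[OF G]] .
  have "Z = (Z \<inter> {c \<in> amb I. h c = 0}) \<union> (Z \<inter> {c \<in> amb I. G c = 0})" using prod0 ZA by auto
  then have "Z = Z \<inter> {c \<in> amb I. h c = 0} \<or> Z = Z \<inter> {c \<in> amb I. G c = 0}"
    using irr c1 c2 unfolding zirred_def by blast
  then show ?thesis
  proof
    assume "Z = Z \<inter> {c \<in> amb I. h c = 0}"
    then have "Z \<subseteq> {c \<in> amb I. h c = 0}" by (metis Int_lower2)
    then show ?thesis using hz by auto
  next
    assume "Z = Z \<inter> {c \<in> amb I. G c = 0}"
    then have "Z \<subseteq> {c \<in> amb I. G c = 0}" by (metis Int_lower2)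
    then show ?thesis by auto
  qed
qed

lemma sum_lessThan_add: "(\<Sum>i<(a::nat)+b. f i) = (\<Sum>i<a. f i) + (\<Sum>i<b. (f (a+i) :: 'c::comm_monoid_add))"
  by (induction b) (auto simp: add.assoc)

lemma indep_append:
  assumes irr: "zirred I Z" and sub: "Z' \<subseteq> Z" and hp: "h \<in> polyfun I" and h0: "\<forall>c\<in>Z'. h c = 0"
    and hz: "\<exists>z\<in>Z. h z \<noteq> 0" and i1: "indep_on Z' fs'" and i2: "indep_on Z fs" and fsp: "set fs \<subseteq> polyfun I"
  shows "indep_on Z (fs' @ map (\<lambda>f c. h c * f c) fs)"
  unfolding indep_on_def
proof (rule allI, rule impI)
  fix a :: "nat \<Rightarrow> complex"
  define L where "L = length fs'"
  define gs where "gs = fs' @ map (\<lambda>f c. h c * f c) fs"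
  assume H0: "\<forall>x\<in>Z. (\<Sum>i<length (fs' @ map (\<lambda>f c. h c * f c) fs). a i * ((fs' @ map (\<lambda>f c. h c * f c) fs) ! i) x) = 0"
  have H: "(\<Sum>i<L. a i * (fs'!i) x) + h x * (\<Sum>i<length fs. a (L + i) * (fs!i) x) = 0" if x: "x \<in> Z" for x
  proof -
    have "0 = (\<Sum>i<L + length fs. a i * (gs ! i) x)" using H0 x by (simp add: gs_def L_def)
    also have "\<dots> = (\<Sum>i<L. a i * (gs ! i) x) + (\<Sum>i<length fs. a (L+i) * (gs ! (L+i)) x)"
      by (rule sum_lessThan_add)
    also have "(\<Sum>i<L. a i * (gs ! i) x) = (\<Sum>i<L. a i * (fs' ! i) x)"
      by (rule sum.cong) (auto simp: gs_def L_def nth_append)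
    also have "(\<Sum>i<length fs. a (L+i) * (gs ! (L+i)) x) = (\<Sum>i<length fs. h x * (a (L + i) * (fs!i) x))"
      by (rule sum.cong) (auto simp: gs_def L_def nth_append)
    also have "\<dots> = h x * (\<Sum>i<length fs. a (L + i) * (fs!i) x)"
      by (simp add: sum_distrib_left)
    finally show ?thesis by simp
  qed
  have a1: "\<forall>i<L. a i = 0"
  proof -
    have "\<forall>x\<in>Z'. (\<Sum>i<length fs'. a i * (fs'!i) x) = 0"
    proof
      fix x assume x: "x \<in> Z'"
      then have "x \<in> Z" "h x = 0" using sub h0 by auto
      then show "(\<Sum>i<length fs'. a i * (fs'!i) x) = 0" using H[of x] by (simp add: L_def)
    qed
    then show ?thesis using i1 unfolding indep_on_def L_def by blast
  qed
  define G where "G = (\<lambda>c. \<Sum>i<length fs. a (L + i) * (fs!i) c)"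
  have "(\<lambda>c. a (L+i) * (fs!i) c) \<in> polyfun I" if "i < length fs" for i
  proof -
    have "fs!i \<in> polyfun I" using that fsp nth_mem by auto
    then show ?thesis by (rule polyfun_scale)
  qed
  then have Gp: "G \<in> polyfun I" unfolding G_def
    using polyfun_sum[of "{..<length fs}" "\<lambda>i c. a (L+i) * (fs!i) c" I] by simp
  have "\<forall>c\<in>Z. h c * G c = 0" using H a1 by (simp add: G_def)
  then have "\<forall>c\<in>Z. G c = 0" using zirred_prod[OF irr hp Gp _ hz] by blast
  then have a2: "\<forall>i<length fs. a (L + i) = 0"
    using spec[OF i2[unfolded indep_on_def], of "\<lambda>i. a (L+i)"] unfolding G_def by simp
  show "\<forall>i<length (fs' @ map (\<lambda>f c. h c * f c) fs). a i = 0"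
  proof (intro allI impI)
    fix i assume i: "i < length (fs' @ map (\<lambda>f c. h c * f c) fs)"
    show "a i = 0"
    proof (cases "i < L")
      case True then show ?thesis using a1 by blast
    next
      case False
      then have "i = L + (i - L)" "i - L < length fs" using i by (auto simp: L_def)
      then show ?thesis using a2 by metis
    qed
  qed
qed

lemma indep_one: "Z \<noteq> {} \<Longrightarrow> indep_on Z [\<lambda>c. 1]"
  unfolding indep_on_def by auto

lemma chain_lower:
  assumes irr: "\<And>i. i \<le> k \<Longrightarrow> zirred I (Zc i)" and ch: "\<And>i. i < k \<Longrightarrow> Zc i \<subseteq> Zc (Suc i)"
    and hp: "\<And>i. i < k \<Longrightarrow> h i \<in> polyfun I \<and> (\<forall>c\<in>Zc i. h i c = 0) \<and> (\<exists>z\<in>Zc (Suc i). h i z \<noteq> 0) \<and> gp I e (h i)"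
  shows "i \<le> k \<Longrightarrow> \<exists>fs. set fs \<subseteq> polyfun I \<and> (\<forall>f\<in>set fs. gp I (t*e) f) \<and> indep_on (Zc i) fs \<and> (t + i choose i) \<le> length fs"
proof (induction i arbitrary: t)
  case 0
  have "Zc 0 \<noteq> {}" using irr[of 0] unfolding zirred_def by simp
  then have "indep_on (Zc 0) [\<lambda>c. 1]" by (rule indep_one)
  moreover have "(\<lambda>c. 1) \<in> polyfun I" by (rule polyfun.pconst)
  moreover have "gp I (t*e) (\<lambda>c. 1)" by (rule gp.gconst)
  ultimately show ?case by (intro exI[of _ "[\<lambda>c. 1]"]) auto
next
  case (Suc i)
  then have ik: "i < k" by simp
  note IHo = Suc.IH
  have sk: "Suc i \<le> k" using Suc.prems .
  show ?case
  proof (induction t)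
    case 0
    have "Zc (Suc i) \<noteq> {}" using irr[of "Suc i"] Suc.prems unfolding zirred_def by simp
    then have "indep_on (Zc (Suc i)) [\<lambda>c. 1]" by (rule indep_one)
    moreover have "(\<lambda>c. 1) \<in> polyfun I" by (rule polyfun.pconst)
    moreover have "gp I (0*e) (\<lambda>c. 1)" by (rule gp.gconst)
    ultimately show ?case by (intro exI[of _ "[\<lambda>c. 1]"]) auto
  next
    case (Suc t)
    obtain fs1 where f1: "set fs1 \<subseteq> polyfun I" "\<forall>f\<in>set fs1. gp I (Suc t * e) f"
      "indep_on (Zc i) fs1" "(Suc t + i choose i) \<le> length fs1"
      using IHo[of "Suc t"] ik by auto
    obtain fs2 where f2: "set fs2 \<subseteq> polyfun I" "\<forall>f\<in>set fs2. gp I (t * e) f"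
      "indep_on (Zc (Suc i)) fs2" "(t + Suc i choose Suc i) \<le> length fs2"
      using Suc.IH by auto
    define fs where "fs = fs1 @ map (\<lambda>f c. h i c * f c) fs2"
    have hi: "h i \<in> polyfun I" "\<forall>c\<in>Zc i. h i c = 0" "\<exists>z\<in>Zc (Suc i). h i z \<noteq> 0" "gp I e (h i)"
      using hp[OF ik] by auto
    have "set fs \<subseteq> polyfun I"
    proof
      fix f assume "f \<in> set fs"
      then consider "f \<in> set fs1" | g where "g \<in> set fs2" "f = (\<lambda>c. h i c * g c)"
        unfolding fs_def by auto
      then show "f \<in> polyfun I"
      proof cases
        case 1 then show ?thesis using f1 by blast
      next
        case 2 then show ?thesis using f2(1) hi(1) polyfun.pmul[of "h i" I g] by auto
      qed
    qed
    moreover have "\<forall>f\<in>set fs. gp I (Suc t * e) f"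
    proof
      fix f assume "f \<in> set fs"
      then consider "f \<in> set fs1" | g where "g \<in> set fs2" "f = (\<lambda>c. h i c * g c)"
        unfolding fs_def by auto
      then show "gp I (Suc t * e) f"
      proof cases
        case 1 then show ?thesis using f1 by blast
      next
        case 2
        then have "gp I (t*e) g" using f2(2) by blast
        then show ?thesis using gp.gmul[OF hi(4), of "t*e" g "Suc t * e"] 2 by simp
      qed
    qed
    moreover have "indep_on (Zc (Suc i)) fs"
      unfolding fs_def
      by (rule indep_append[OF irr[OF sk] ch[OF ik] hi(1) hi(2) hi(3) f1(3) f2(3) f2(1)])
    moreover have "(Suc t + Suc i choose Suc i) \<le> length fs"
    proof -
      have "(Suc t + Suc i choose Suc i) = (Suc t + i choose i) + (Suc t + i choose Suc i)"
        by simp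
      also have "(Suc t + i choose Suc i) = (t + Suc i choose Suc i)" by simp
      finally show ?thesis using f1(4) f2(4) by (simp add: fs_def)
    qed
    ultimately show ?case by blast
  qed
qed

lemma fact_binom: "(t+1)^r \<le> fact r * (t + r choose r)"
proof (induction r)
  case 0 then show ?case by simp
next
  case (Suc r)
  have "fact (Suc r) * (t + Suc r choose Suc r) = fact r * (Suc r * (Suc (t + r) choose Suc r))"
    by (simp add: algebra_simps)
  also have "Suc r * (Suc (t + r) choose Suc r) = Suc (t + r) * (t + r choose r)"
    by (rule Suc_times_binomial)
  finally have eq: "fact (Suc r) * (t + Suc r choose Suc r) = Suc (t + r) * (fact r * (t + r choose r))"
    by (simp add: algebra_simps)
  have "(t+1)^Suc r = (t+1) * (t+1)^r" by simp
  also have "\<dots> \<le> Suc (t + r) * (fact r * (t + r choose r))"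
    using Suc.IH by (intro mult_le_mono) auto
  finally show ?case using eq by simp
qed

lemma growth_contra:
  fixes t K r :: nat
  assumes t: "t = fact (Suc r) * (K+1)^r" and le: "(t + Suc r choose Suc r) \<le> (t*K+1)^r"
  shows False
proof -
  have "(t+1)^Suc r \<le> fact (Suc r) * (t + Suc r choose Suc r)" by (rule fact_binom)
  also have "\<dots> \<le> fact (Suc r) * (t*K+1)^r" using le by simp
  also have "(t*K+1)^r \<le> ((K+1)*(t+1))^r" by (intro power_mono) (auto simp: algebra_simps)
  then have "fact (Suc r) * (t*K+1)^r \<le> fact (Suc r) * ((K+1)*(t+1))^r" by simp
  also have "\<dots> = fact (Suc r) * ((K+1)^r * (t+1)^r)" by (simp only: power_mult_distrib)
  also have "\<dots> = fact (Suc r) * (K+1)^r * (t+1)^r" by (simp only: mult.assoc)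
  also have "\<dots> = t * (t+1)^r" using t by simp
  also have "\<dots> < (t+1) * (t+1)^r" by simp
  also have "\<dots> = (t+1)^Suc r" by simp
  finally show False by simp
qed

lemma chain_mono: "(\<And>i. i < k \<Longrightarrow> Zc i \<subseteq> Zc (Suc i)) \<Longrightarrow> i \<le> j \<Longrightarrow> j \<le> k \<Longrightarrow> Zc i \<subseteq> Zc j"
proof (induction j)
  case 0 then show ?case by simp
next
  case (Suc j)
  show ?case
  proof (cases "i = Suc j")
    case True then show ?thesis by simp
  next
    case False
    then have "Zc i \<subseteq> Zc j" using Suc by simp
    also have "Zc j \<subseteq> Zc (Suc j)" using Suc.prems by simp
    finally show ?thesis .
  qed
qed

theorem chain_bound:
  assumes J: "finite J" and amb: "\<And>x. \<Phi> x \<in> amb I" and deg: "\<And>\<gamma>. \<gamma> \<in> I \<Longrightarrow> gp J \<delta> (\<lambda>x. \<Phi> x \<gamma>)"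
    and irr: "\<And>i. i \<le> k \<Longrightarrow> zirred I (Zc i)" and ch: "\<And>i. i < k \<Longrightarrow> Zc i \<subset> Zc (Suc i)"
    and top: "Zc k \<subseteq> zclosure I (range \<Phi>)"
  shows "k \<le> card J"
proof (rule ccontr)
  assume "\<not> k \<le> card J"
  define r where "r = card J"
  have rk: "Suc r \<le> k" using \<open>\<not> k \<le> card J\<close> by (simp add: r_def)
  have ch': "\<And>i. i < k \<Longrightarrow> Zc i \<subseteq> Zc (Suc i)" using ch by blast
  have ex: "\<forall>i\<in>{..<k}. \<exists>fd. fst fd \<in> polyfun I \<and> (\<forall>c\<in>Zc i. fst fd c = 0) \<and> (\<exists>z\<in>Zc (Suc i). fst fd z \<noteq> 0) \<and> gp I (snd fd) (fst fd)"
  proof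
    fix i assume "i \<in> {..<k}"
    then have ik: "i < k" by simp
    have cl: "zclosed I (Zc i)" using irr[of i] ik unfolding zirred_def by simp
    then obtain S where S: "S \<subseteq> polyfun I" "Zc i = {c \<in> amb I. \<forall>f\<in>S. f c = 0}"
      unfolding zclosed_def by blast
    obtain z where z: "z \<in> Zc (Suc i)" "z \<notin> Zc i" using ch[OF ik] by blast
    have "zclosed I (Zc (Suc i))" using irr[of "Suc i"] ik unfolding zirred_def by simp
    then have "z \<in> amb I" using zclosed_amb z(1) by blast
    then obtain f where f: "f \<in> S" "f z \<noteq> 0" using z(2) S(2) by blast
    have fp: "f \<in> polyfun I" using f S by blast
    then obtain d where "gp I d f" using polyfun_gp by blast
    then show "\<exists>fd. fst fd \<in> polyfun I \<and> (\<forall>c\<in>Zc i. fst fd c = 0) \<and> (\<exists>z\<in>Zc (Suc i). fst fd z \<noteq> 0) \<and> gp I (snd fd) (fst fd)"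
      using fp f z S by (intro exI[of _ "(f, d)"]) auto
  qed
  from bchoice[OF ex] obtain H where H: "\<forall>i\<in>{..<k}. fst (H i) \<in> polyfun I \<and> (\<forall>c\<in>Zc i. fst (H i) c = 0) \<and> (\<exists>z\<in>Zc (Suc i). fst (H i) z \<noteq> 0) \<and> gp I (snd (H i)) (fst (H i))"
    by blast
  define e where "e = (\<Sum>i<k. snd (H i))"
  define h where "h = (\<lambda>i. fst (H i))"
  have hp: "\<And>i. i < k \<Longrightarrow> h i \<in> polyfun I \<and> (\<forall>c\<in>Zc i. h i c = 0) \<and> (\<exists>z\<in>Zc (Suc i). h i z \<noteq> 0) \<and> gp I e (h i)"
  proof -
    fix i assume ik: "i < k"
    have "snd (H i) \<le> e" unfolding e_def using ik by (intro member_le_sum) auto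
    then show "h i \<in> polyfun I \<and> (\<forall>c\<in>Zc i. h i c = 0) \<and> (\<exists>z\<in>Zc (Suc i). h i z \<noteq> 0) \<and> gp I e (h i)"
      using H ik gp_mono[of I "snd (H i)" "h i" e] unfolding h_def by auto
  qed
  define t where "t = fact (Suc r) * (e*\<delta>+1)^r"
  obtain fs where fs: "set fs \<subseteq> polyfun I" "\<forall>f\<in>set fs. gp I (t*e) f" "indep_on (Zc (Suc r)) fs"
    "(t + Suc r choose Suc r) \<le> length fs"
    using chain_lower[where k=k and I=I and Zc=Zc and h=h and e=e and i="Suc r" and t=t, OF irr ch' hp rk] by blast
  have "Zc (Suc r) \<subseteq> Zc k" using chain_mono[where k=k and Zc=Zc and i="Suc r" and j=k, OF ch' rk] by simp
  then have "Zc (Suc r) \<subseteq> zclosure I (range \<Phi>)" using top by blast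
  then have "length fs \<le> (t*e*\<delta>+1) ^ card J"
    using UB[OF J amb deg _ fs(1) _ fs(3)] fs(2) by blast
  then have "(t + Suc r choose Suc r) \<le> (t*(e*\<delta>)+1)^r" using fs(4) by (simp add: r_def mult.assoc)
  then show False using growth_contra[OF t_def] by blast
qed

lemma zdim_le:
  assumes "\<And>k Zc. (\<forall>i\<le>k. zirred I (Zc i) \<and> Zc i \<subseteq> V) \<Longrightarrow> (\<forall>i<k. Zc i \<subset> Zc (Suc i)) \<Longrightarrow> k \<le> r"
  shows "zdim I V \<le> enat r"
  unfolding zdim_def using assms by (auto intro!: Sup_least)

theorem zdim_union_bound:
  assumes F: "finite F" and J: "\<And>s. s \<in> F \<Longrightarrow> finite (J s) \<and> card (J s) \<le> r"
    and amb: "\<And>s x. s \<in> F \<Longrightarrow> \<Phi> s x \<in> amb I"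
    and deg: "\<And>s \<gamma>. s \<in> F \<Longrightarrow> \<gamma> \<in> I \<Longrightarrow> gp (J s) \<delta> (\<lambda>x. \<Phi> s x \<gamma>)"
    and X: "X \<subseteq> (\<Union>s\<in>F. range (\<Phi> s))"
  shows "zdim I (zclosure I X) \<le> enat r"
proof (rule zdim_le)
  fix k Zc assume c1: "\<forall>i\<le>k. zirred I (Zc i) \<and> Zc i \<subseteq> zclosure I X" and c2: "\<forall>i<k. Zc i \<subset> Zc (Suc i)"
  have cl: "\<And>s. s \<in> F \<Longrightarrow> zclosed I (zclosure I (range (\<Phi> s)))"
    using amb by (intro zclosure_closed) auto
  have "zclosed I (\<Union>s\<in>F. zclosure I (range (\<Phi> s)))" using zclosed_UN[OF F cl] by simp
  moreover have "X \<subseteq> (\<Union>s\<in>F. zclosure I (range (\<Phi> s)))"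
    using X unfolding zclosure_def by blast
  ultimately have "zclosure I X \<subseteq> (\<Union>s\<in>F. zclosure I (range (\<Phi> s)))" by (rule zclosure_least)
  then have "Zc k \<subseteq> (\<Union>s\<in>F. zclosure I (range (\<Phi> s)))" using c1 by blast
  then obtain s where s: "s \<in> F" "Zc k \<subseteq> zclosure I (range (\<Phi> s))"
    using zirred_sub_UN[where I=I and Z="Zc k" and F=F and V="\<lambda>s. zclosure I (range (\<Phi> s))", OF _ F cl] c1 by blast
  have "k \<le> card (J s)"
    by (rule chain_bound[of "J s" "\<Phi> s" I \<delta> k Zc]) (use s J amb deg c1 c2 in auto)
  then show "k \<le> r" using J[OF s(1)] by simp
qed

lemma det_on_mat:
  assumes f: "bij_betw f {0..<N} S"
  shows "det_on S A = det (mat N N (\<lambda>(i,j). A (f i) (f j)))"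
proof -
  let ?M = "mat N N (\<lambda>(i,j). A (f i) (f j))"
  let ?f' = "inv_into {0..<N} f"
  define \<phi> where "\<phi> = (\<lambda>\<pi> x. if x \<in> S then f (\<pi> (?f' x)) else x)"
  have bij: "bij_betw \<phi> {\<pi>. \<pi> permutes {0..<N}} {\<pi>. \<pi> permutes S}"
    unfolding \<phi>_def by (rule bij_betw_permutations[OF f])
  have inj: "inj_on f {0..<N}" using f bij_betw_imp_inj_on by blast
  have fin: "finite {0..<N}" by simp
  have "det ?M = (\<Sum>p | p permutes {0..<N}. of_int (sign p) * (\<Prod>i=0..<N. A (f i) (f (p i))))"
  proof -
    have "det ?M = (\<Sum>p | p permutes {0..<N}. of_int (sign p) * (\<Prod>i=0..<N. ?M $$ (i, p i)))"
      unfolding det_def by simp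
    also have "\<dots> = (\<Sum>p | p permutes {0..<N}. of_int (sign p) * (\<Prod>i=0..<N. A (f i) (f (p i))))"
    proof (rule sum.cong[OF refl])
      fix p assume "p \<in> {p. p permutes {0..<N}}"
      then have pp: "p permutes {0..<N}" by simp
      have "(\<Prod>i=0..<N. ?M $$ (i, p i)) = (\<Prod>i=0..<N. A (f i) (f (p i)))"
      proof (rule prod.cong[OF refl])
        fix i assume i: "i \<in> {0..<N}"
        then have "p i \<in> {0..<N}" using permutes_in_image[OF pp] by simp
        then show "?M $$ (i, p i) = A (f i) (f (p i))" using i by simp
      qed
      then show "of_int (sign p) * (\<Prod>i=0..<N. ?M $$ (i, p i)) = of_int (sign p) * (\<Prod>i=0..<N. A (f i) (f (p i)))"
        by simp
    qed
    finally show ?thesis .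
  qed
  also have "\<dots> = (\<Sum>p | p permutes {0..<N}. of_int (sign (\<phi> p)) * (\<Prod>x\<in>S. A x (\<phi> p x)))"
  proof (rule sum.cong)
    fix p assume p: "p \<in> {p. p permutes {0..<N}}"
    then have pp: "p permutes {0..<N}" by simp
    have loc: "permutes_bij_finite p {0..<N} S f ?f'"
    proof (unfold_locales)
      show "p permutes {0..<N}" by (rule pp)
      show "bij_betw f {0..<N} S" by (rule f)
      show "?f' (f x) = x" if "x \<in> {0..<N}" for x using inv_into_f_f[OF inj that] .
      show "finite {0..<N}" by simp
    qed
    have "sign (\<phi> p) = sign p"
      unfolding \<phi>_def by (rule permutes_bij_finite.sign_p'[OF loc])
    moreover have "(\<Prod>x\<in>S. A x (\<phi> p x)) = (\<Prod>i\<in>{0..<N}. A (f i) (\<phi> p (f i)))"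
      by (rule prod.reindex_bij_betw[OF f, symmetric])
    moreover have "(\<Prod>i\<in>{0..<N}. A (f i) (\<phi> p (f i))) = (\<Prod>i=0..<N. A (f i) (f (p i)))"
    proof (rule prod.cong[OF refl])
      fix i assume i: "i \<in> {0..<N}"
      have fi: "f i \<in> S" by (rule bij_betw_apply[OF f i])
      have "\<phi> p (f i) = f (p (?f' (f i)))" using fi by (simp add: \<phi>_def)
      also have "?f' (f i) = i" by (rule inv_into_f_f[OF inj i])
      finally show "A (f i) (\<phi> p (f i)) = A (f i) (f (p i))" by simp
    qed
    ultimately show "of_int (sign p) * (\<Prod>i=0..<N. A (f i) (f (p i))) = of_int (sign (\<phi> p)) * (\<Prod>x\<in>S. A x (\<phi> p x))"
      by simp
  qed simp
  also have "\<dots> = (\<Sum>q | q permutes S. of_int (sign q) * (\<Prod>x\<in>S. A x (q x)))"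
    using sum.reindex_bij_betw[OF bij, of "\<lambda>q. of_int (sign q) * (\<Prod>x\<in>S. A x (q x))"] by simp
  finally show ?thesis unfolding det_on_def by simp
qed

lemma det_on_kernel:
  assumes fin: "finite S" and d: "det_on S A = 0"
  shows "\<exists>w. (\<forall>j. j \<notin> S \<longrightarrow> w j = 0) \<and> (\<exists>j\<in>S. w j \<noteq> 0) \<and> (\<forall>i\<in>S. (\<Sum>j\<in>S. A i j * w j) = 0)"
proof -
  define N where "N = card S"
  obtain f where f: "bij_betw f {0..<N} S" using ex_bij_betw_nat_finite[OF fin] unfolding N_def by blast
  let ?M = "mat N N (\<lambda>(i,j). A (f i) (f j))"
  let ?f' = "inv_into {0..<N} f"
  have inj: "inj_on f {0..<N}" using f bij_betw_imp_inj_on by blast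
  have "det ?M = 0" using d det_on_mat[OF f] by simp
  then obtain v where v: "v \<in> carrier_vec N" "v \<noteq> 0\<^sub>v N" "?M *\<^sub>v v = 0\<^sub>v N"
    using det_0_iff_vec_prod_zero[of ?M N] by auto
  define w where "w = (\<lambda>j. if j \<in> S then v $ (?f' j) else 0)"
  have wf: "w (f k) = v $ k" if "k < N" for k
  proof -
    have "f k \<in> S" using bij_betw_apply[OF f, of k] that by simp
    moreover have "?f' (f k) = k" using inv_into_f_f[OF inj] that by simp
    ultimately show ?thesis unfolding w_def by simp
  qed
  have sumeq: "(\<Sum>j\<in>S. A (f k) j * w j) = (?M *\<^sub>v v) $ k" if k: "k < N" for k
  proof -
    have "(\<Sum>j\<in>S. A (f k) j * w j) = (\<Sum>l\<in>{0..<N}. A (f k) (f l) * w (f l))"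
      using sum.reindex_bij_betw[OF f, of "\<lambda>j. A (f k) j * w j"] by simp
    also have "\<dots> = (\<Sum>l\<in>{0..<N}. A (f k) (f l) * v $ l)" using wf by simp
    also have "\<dots> = (?M *\<^sub>v v) $ k" using k v(1)
      by (simp add: mult_mat_vec_def scalar_prod_def)
    finally show ?thesis .
  qed
  have "\<exists>j\<in>S. w j \<noteq> 0"
  proof -
    from v(1,2) obtain k where k: "k < N" "v $ k \<noteq> 0" by (auto simp: vec_eq_iff)
    then have "f k \<in> S" using bij_betw_apply[OF f, of k] by simp
    then show ?thesis using wf k by metis
  qed
  moreover have "\<forall>i\<in>S. (\<Sum>j\<in>S. A i j * w j) = 0"
  proof
    fix i assume i: "i \<in> S"
    then obtain k where k: "k < N" "i = f k" using f unfolding bij_betw_def by auto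
    show "(\<Sum>j\<in>S. A i j * w j) = 0" using sumeq[OF k(1)] v(3) k by simp
  qed
  moreover have "\<forall>j. j \<notin> S \<longrightarrow> w j = 0" unfolding w_def by simp
  ultimately show ?thesis by blast
qed

lemma det_on_transpose:
  assumes fin: "finite S"
  shows "det_on S (\<lambda>i j. A j i) = det_on S A"
proof -
  define N where "N = card S"
  obtain f where f: "bij_betw f {0..<N} S" using ex_bij_betw_nat_finite[OF fin] unfolding N_def by blast
  have "det_on S (\<lambda>i j. A j i) = det (mat N N (\<lambda>(i,j). A (f j) (f i)))" using det_on_mat[OF f] by simp
  also have "mat N N (\<lambda>(i,j). A (f j) (f i)) = transpose_mat (mat N N (\<lambda>(i,j). A (f i) (f j)))"
    by (rule eq_matI) auto
  also have "det \<dots> = det (mat N N (\<lambda>(i,j). A (f i) (f j)))" by (rule det_transpose) auto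
  also have "\<dots> = det_on S A" using det_on_mat[OF f] by simp
  finally show ?thesis .
qed

lemma det_on_identical_rows:
  assumes fin: "finite S" and rs: "r \<in> S" "s \<in> S" "r \<noteq> s" and eq: "\<And>j. A r j = A s j"
  shows "det_on S A = 0"
proof -
  define N where "N = card S"
  obtain f where f: "bij_betw f {0..<N} S" using ex_bij_betw_nat_finite[OF fin] unfolding N_def by blast
  obtain k where k: "k < N" "r = f k" using f rs(1) unfolding bij_betw_def by auto
  obtain l where l: "l < N" "s = f l" using f rs(2) unfolding bij_betw_def by auto
  have "k \<noteq> l" using k l rs(3) by auto
  have Ar: "A (f k) = A (f l)" using eq k(2) l(2) by auto
  have "det (mat N N (\<lambda>(i,j). A (f i) (f j))) = 0"
  proof (rule det_identical_rows[OF _ \<open>k \<noteq> l\<close> k(1) l(1)])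
    show "mat N N (\<lambda>(i,j). A (f i) (f j)) \<in> carrier_mat N N" by simp
    show "row (mat N N (\<lambda>(i,j). A (f i) (f j))) k = row (mat N N (\<lambda>(i,j). A (f i) (f j))) l"
      using k(1) l(1) Ar by (intro eq_vecI) simp_all
  qed
  then show ?thesis using det_on_mat[OF f] by simp
qed

lemma det_on_upd:
  assumes fin: "finite S" and r: "r \<in> S"
  shows "det_on S (A(r := x)) = (\<Sum>p | p permutes S. of_int (sign p) * x (p r) * (\<Prod>i\<in>S-{r}. A i (p i)))"
  unfolding det_on_def
proof (rule sum.cong)
  fix p assume "p \<in> {p. p permutes S}"
  have "(\<Prod>i\<in>S. (A(r := x)) i (p i)) = (A(r := x)) r (p r) * (\<Prod>i\<in>S-{r}. (A(r := x)) i (p i))"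
    using prod.remove[OF fin r] by blast
  also have "(\<Prod>i\<in>S-{r}. (A(r := x)) i (p i)) = (\<Prod>i\<in>S-{r}. A i (p i))"
    by (rule prod.cong) auto
  finally show "of_int (sign p) * (\<Prod>i\<in>S. (A(r := x)) i (p i)) = of_int (sign p) * x (p r) * (\<Prod>i\<in>S-{r}. A i (p i))"
    by simp
qed simp

lemma det_on_linear_row:
  assumes fin: "finite S" and r: "r \<in> S" and K: "finite K"
  shows "det_on S (A(r := (\<lambda>j. \<Sum>k\<in>K. c k * v k j))) = (\<Sum>k\<in>K. c k * det_on S (A(r := v k)))"
proof -
  let ?P = "{p. p permutes S}"
  have "det_on S (A(r := (\<lambda>j. \<Sum>k\<in>K. c k * v k j))) =
        (\<Sum>p\<in>?P. of_int (sign p) * (\<Sum>k\<in>K. c k * v k (p r)) * (\<Prod>i\<in>S-{r}. A i (p i)))"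
    using det_on_upd[OF fin r] by simp
  also have "\<dots> = (\<Sum>p\<in>?P. \<Sum>k\<in>K. c k * (of_int (sign p) * v k (p r) * (\<Prod>i\<in>S-{r}. A i (p i))))"
    by (rule sum.cong) (simp_all add: sum_distrib_left sum_distrib_right mult_ac)
  also have "\<dots> = (\<Sum>k\<in>K. \<Sum>p\<in>?P. c k * (of_int (sign p) * v k (p r) * (\<Prod>i\<in>S-{r}. A i (p i))))"
    by (rule sum.swap)
  also have "\<dots> = (\<Sum>k\<in>K. c k * det_on S (A(r := v k)))"
    by (rule sum.cong) (auto simp: det_on_upd[OF fin r] sum_distrib_left)
  finally show ?thesis .
qed

lemma isCont_nonzero:
  fixes f :: "complex \<Rightarrow> complex"
  assumes "isCont f 0" "f 0 \<noteq> 0"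
  shows "\<exists>t. t \<noteq> 0 \<and> f t \<noteq> 0"
proof -
  have "eventually (\<lambda>t. f t \<noteq> 0) (at 0)"
    using assms tendsto_imp_eventually_ne unfolding isCont_def by blast
  moreover have "eventually (\<lambda>t. t \<noteq> 0) (at (0::complex))" by (simp add: eventually_at_filter)
  ultimately have "eventually (\<lambda>t. f t \<noteq> 0 \<and> t \<noteq> 0) (at (0::complex))" by (rule eventually_conj)
  then have "at (0::complex) = bot \<or> (\<exists>t. f t \<noteq> 0 \<and> t \<noteq> 0)" by (rule eventually_happens)
  then show ?thesis using at_neq_bot by blast
qed

lemma det_on_cong:
  assumes "\<And>i j. i \<in> S \<Longrightarrow> j \<in> S \<Longrightarrow> A i j = A' i j"
  shows "det_on S A = det_on S A'"
  unfolding det_on_def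
proof (rule sum.cong[OF refl])
  fix p assume "p \<in> {p. p permutes S}"
  then have pp: "p permutes S" by simp
  have "(\<Prod>i\<in>S. A i (p i)) = (\<Prod>i\<in>S. A' i (p i))"
  proof (rule prod.cong[OF refl])
    fix i assume i: "i \<in> S"
    then have "p i \<in> S" using permutes_in_image[OF pp] by simp
    then show "A i (p i) = A' i (p i)" using assms i by simp
  qed
  then show "of_int (sign p) * (\<Prod>i\<in>S. A i (p i)) = of_int (sign p) * (\<Prod>i\<in>S. A' i (p i))" by simp
qed

lemma mdeg_pos:
  assumes "\<And>k. n \<le> k \<Longrightarrow> \<tau> k = 0" "\<tau> \<noteq> (\<lambda>_. 0)"
  shows "0 < mdeg n \<tau>"
proof -
  have "\<exists>k. \<tau> k \<noteq> 0"
  proof (rule ccontr)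
    assume "\<not> (\<exists>k. \<tau> k \<noteq> 0)"
    then have "\<tau> = (\<lambda>_. 0)" by (simp add: fun_eq_iff)
    then show False using assms(2) by simp
  qed
  then obtain k where k: "\<tau> k \<noteq> 0" by blast
  have kn: "k < n"
  proof (rule ccontr)
    assume "\<not> k < n"
    then have "\<tau> k = 0" using assms(1)[of k] by simp
    then show False using k by simp
  qed
  have "\<tau> k \<le> mdeg n \<tau>" unfolding mdeg_def using kn by (intro member_le_sum) auto
  then show ?thesis using k by simp
qed

lemma LA_main:
  fixes g :: "mi \<Rightarrow> mi" and T :: "mi \<Rightarrow> complex"
  assumes fin: "finite C" and z0: "(\<lambda>_. 0) \<in> C" and supp: "\<And>\<tau> k. \<tau> \<in> C \<Longrightarrow> n \<le> k \<Longrightarrow> \<tau> k = 0"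
    and inj: "inj_on g C"
    and allz: "\<And>c. det_on C (\<lambda>\<sigma> \<tau>. pade c (g \<sigma>) \<tau>) = 0"
  shows "\<exists>w. (\<forall>j. j \<notin> C \<longrightarrow> w j = 0) \<and> w (\<lambda>_. 0) = 0 \<and> (\<exists>j\<in>C. w j \<noteq> 0) \<and>
             (\<forall>i\<in>C. (\<Sum>\<tau>\<in>C. pade T (g i) \<tau> * w \<tau>) = 0)"
proof (rule ccontr)
  assume nok: "\<not> (\<exists>w. (\<forall>j. j \<notin> C \<longrightarrow> w j = 0) \<and> w (\<lambda>_. 0) = 0 \<and> (\<exists>j\<in>C. w j \<noteq> 0) \<and>
             (\<forall>i\<in>C. (\<Sum>\<tau>\<in>C. pade T (g i) \<tau> * w \<tau>) = 0))"
  define z :: mi where "z = (\<lambda>_. 0)"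
  define A0 where "A0 = (\<lambda>\<sigma> \<tau>. pade T (g \<sigma>) \<tau>)"
  have "det_on C (\<lambda>i j. A0 j i) = 0" using det_on_transpose[OF fin, of A0] allz[of T] by (simp add: A0_def)
  from det_on_kernel[OF fin this] obtain u where u: "\<forall>j. j \<notin> C \<longrightarrow> u j = 0" "\<exists>j\<in>C. u j \<noteq> 0" "\<forall>i\<in>C. (\<Sum>j\<in>C. A0 j i * u j) = 0"
    by blast
  define U where "U = {i\<in>C. u i \<noteq> 0}"
  have Ufin: "finite U" using fin by (simp add: U_def)
  have Une: "U \<noteq> {}" using u(2) by (auto simp: U_def)
  define M where "M = Max ((\<lambda>i. mdeg n (g i)) ` U)"
  have "M \<in> (\<lambda>i. mdeg n (g i)) ` U" unfolding M_def using Ufin Une by (intro Max_in) auto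
  then obtain istar where ist: "istar \<in> U" "mdeg n (g istar) = M" by blast
  have istC: "istar \<in> C" and ust: "u istar \<noteq> 0" using ist(1) by (auto simp: U_def)
  have maxp: "mdeg n (g i) \<le> mdeg n (g istar)" if "i \<in> C" "u i \<noteq> 0" for i
    unfolding ist(2) M_def using Ufin that by (intro Max_ge) (auto simp: U_def)
  define B where "B = (\<lambda>i (\<tau>::mi). if (\<forall>k. \<tau> k \<le> g i k) \<and> (\<lambda>k. g i k - \<tau> k) = g istar then (1::complex) else 0)"
  define e0 where "e0 = (\<lambda>\<tau>::mi. if \<tau> = z then (1::complex) else 0)"
  have uB: "(\<Sum>i\<in>C. u i * B i \<tau>) = u istar * e0 \<tau>" if \<tau>: "\<tau> \<in> C" for \<tau>
  proof -
    have term0: "u i * B i \<tau> = 0" if i: "i \<in> C" "i \<noteq> istar" for i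
    proof (cases "(\<forall>k. \<tau> k \<le> g i k) \<and> (\<lambda>k. g i k - \<tau> k) = g istar")
      case False
      then have "B i \<tau> = 0" unfolding B_def by (rule if_not_P)
      then show ?thesis by simp
    next
      case True
      have gi: "g i k = g istar k + \<tau> k" for k
      proof -
        have h1: "\<tau> k \<le> g i k" using True by blast
        have "(\<lambda>k. g i k - \<tau> k) = g istar" using True by blast
        then have h2: "g i k - \<tau> k = g istar k" by (rule fun_cong)
        show ?thesis using h1 h2 by arith
      qed
      show ?thesis
      proof (cases "\<tau> = z")
        case True
        then have "g i = g istar" using gi by (auto simp: z_def fun_eq_iff)
        then have "i = istar" using inj i(1) istC by (meson inj_onD)
        then show ?thesis using i(2) by simp
      next
        case False
        have "0 < mdeg n \<tau>" using mdeg_pos[of n \<tau>] supp[OF \<tau>] False by (simp add: z_def)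
        moreover have "mdeg n (g i) = mdeg n (g istar) + mdeg n \<tau>"
          unfolding mdeg_def using gi by (simp add: sum.distrib)
        ultimately have "\<not> mdeg n (g i) \<le> mdeg n (g istar)" by simp
        then have "u i = 0" using maxp i(1) by blast
        then show ?thesis by simp
      qed
    qed
    have Bst: "B istar \<tau> = e0 \<tau>"
    proof (cases "\<tau> = z")
      case True then show ?thesis by (simp add: B_def e0_def z_def)
    next
      case False
      have "\<not> ((\<forall>k. \<tau> k \<le> g istar k) \<and> (\<lambda>k. g istar k - \<tau> k) = g istar)"
      proof
        assume h: "(\<forall>k. \<tau> k \<le> g istar k) \<and> (\<lambda>k. g istar k - \<tau> k) = g istar"
        have "\<tau> k = 0" for k
        proof -
          have h1: "\<tau> k \<le> g istar k" using h by blast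
          have "(\<lambda>k. g istar k - \<tau> k) = g istar" using h by blast
          then have h2: "g istar k - \<tau> k = g istar k" by (rule fun_cong)
          show ?thesis using h1 h2 by arith
        qed
        then show False using False by (auto simp: z_def)
      qed
      then show ?thesis using False by (simp add: B_def e0_def)
    qed
    have "(\<Sum>i\<in>C. u i * B i \<tau>) = u istar * B istar \<tau> + (\<Sum>i\<in>C-{istar}. u i * B i \<tau>)"
      using sum.remove[OF fin istC] by blast
    also have "(\<Sum>i\<in>C-{istar}. u i * B i \<tau>) = 0" using term0 by (intro sum.neutral) auto
    finally show ?thesis using Bst by simp
  qed
  define At where "At = (\<lambda>(t::complex) i \<tau>. A0 i \<tau> + t * B i \<tau>)"
  define Mt where "Mt = (\<lambda>t. (At t)(istar := e0))"
  have pade_At: "det_on C (\<lambda>\<sigma> \<tau>. pade (\<lambda>\<gamma>. T \<gamma> + t * (if \<gamma> = g istar then 1 else 0)) (g \<sigma>) \<tau>) = det_on C (At t)" for t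
    by (rule det_on_cong) (simp add: pade_def At_def A0_def B_def)
  have detrel: "det_on C (At t) = t * det_on C (Mt t)" for t
  proof -
    define c where "c = (\<lambda>k. if k = istar then t * u istar else - u k)"
    define v where "v = (\<lambda>k. if k = istar then e0 else At t k)"
    have rowsum: "(\<Sum>k\<in>C. c k * v k j) = u istar * At t istar j" if j: "j \<in> C" for j
    proof -
      have "(\<Sum>i\<in>C. u i * At t i j) = (\<Sum>i\<in>C. A0 i j * u i) + t * (\<Sum>i\<in>C. u i * B i j)"
        by (simp add: At_def distrib_left sum.distrib sum_distrib_left mult_ac)
      also have "\<dots> = t * (u istar * e0 j)" using u(3) j uB[OF j] by simp
      finally have tot: "(\<Sum>i\<in>C. u i * At t i j) = t * (u istar * e0 j)" .
      have "(\<Sum>k\<in>C. c k * v k j) = c istar * v istar j + (\<Sum>k\<in>C-{istar}. c k * v k j)"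
        using sum.remove[OF fin istC] by blast
      also have "(\<Sum>k\<in>C-{istar}. c k * v k j) = (\<Sum>k\<in>C-{istar}. - (u k * At t k j))"
        by (rule sum.cong) (auto simp: c_def v_def)
      also have "\<dots> = - (\<Sum>k\<in>C-{istar}. u k * At t k j)"
        by (rule sum_negf)
      also have "(\<Sum>k\<in>C-{istar}. u k * At t k j) = (\<Sum>i\<in>C. u i * At t i j) - u istar * At t istar j"
        using sum.remove[OF fin istC, of "\<lambda>i. u i * At t i j"] by simp
      finally show ?thesis using tot by (simp add: c_def v_def)
    qed
    have "u istar * det_on C (At t) = det_on C ((At t)(istar := (\<lambda>j. \<Sum>k\<in>{istar}. u istar * At t k j)))"
      using det_on_linear_row[OF fin istC, of "{istar}" "At t" "\<lambda>_. u istar" "At t"] by simp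
    also have "\<dots> = det_on C ((At t)(istar := (\<lambda>j. \<Sum>k\<in>C. c k * v k j)))"
      by (rule det_on_cong) (simp add: rowsum)
    also have "\<dots> = (\<Sum>k\<in>C. c k * det_on C ((At t)(istar := v k)))"
      by (rule det_on_linear_row[OF fin istC finite_subset[OF _ fin]]) simp
    also have "\<dots> = c istar * det_on C ((At t)(istar := v istar)) + (\<Sum>k\<in>C-{istar}. c k * det_on C ((At t)(istar := v k)))"
      using sum.remove[OF fin istC] by blast
    also have "(\<Sum>k\<in>C-{istar}. c k * det_on C ((At t)(istar := v k))) = 0"
    proof (rule sum.neutral, rule ballI)
      fix k assume k: "k \<in> C - {istar}"
      have "det_on C ((At t)(istar := v k)) = 0"
        by (rule det_on_identical_rows[OF fin istC, of k]) (use k in \<open>auto simp: v_def\<close>)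
      then show "c k * det_on C ((At t)(istar := v k)) = 0" by simp
    qed
    finally have "u istar * det_on C (At t) = u istar * (t * det_on C (Mt t))"
      by (simp add: c_def v_def Mt_def fun_upd_def)
    then show ?thesis using ust by simp
  qed
  have M0: "det_on C (Mt 0) \<noteq> 0"
  proof
    assume "det_on C (Mt 0) = 0"
    from det_on_kernel[OF fin this] obtain w where w: "\<forall>j. j \<notin> C \<longrightarrow> w j = 0" "\<exists>j\<in>C. w j \<noteq> 0" "\<forall>i\<in>C. (\<Sum>j\<in>C. Mt 0 i j * w j) = 0"
      by blast
    have "(\<Sum>j\<in>C. Mt 0 istar j * w j) = 0" using w(3) istC by blast
    then have "(\<Sum>j\<in>C. e0 j * w j) = 0" by (simp add: Mt_def)
    moreover have "(\<Sum>j\<in>C. e0 j * w j) = w z"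
    proof -
      have "(\<Sum>j\<in>C. e0 j * w j) = (\<Sum>j\<in>C. if j = z then w j else 0)"
        by (rule sum.cong) (auto simp: e0_def)
      also have "\<dots> = w z" using fin z0 by (simp add: sum.delta z_def)
      finally show ?thesis .
    qed
    ultimately have wz: "w z = 0" by simp
    have rows: "(\<Sum>j\<in>C. A0 i j * w j) = 0" if "i \<in> C" "i \<noteq> istar" for i
    proof -
      have "(\<Sum>j\<in>C. Mt 0 i j * w j) = 0" using w(3) that(1) by blast
      then show ?thesis using that(2) by (simp add: Mt_def At_def)
    qed
    have "0 = (\<Sum>j\<in>C. (\<Sum>i\<in>C. A0 i j * u i) * w j)" using u(3) by simp
    also have "\<dots> = (\<Sum>j\<in>C. \<Sum>i\<in>C. u i * (A0 i j * w j))"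
      by (rule sum.cong[OF refl]) (simp add: sum_distrib_right sum_distrib_left mult_ac)
    also have "\<dots> = (\<Sum>i\<in>C. \<Sum>j\<in>C. u i * (A0 i j * w j))"
      by (rule sum.swap)
    also have "\<dots> = (\<Sum>i\<in>C. u i * (\<Sum>j\<in>C. A0 i j * w j))"
      by (simp add: sum_distrib_left)
    also have "\<dots> = u istar * (\<Sum>j\<in>C. A0 istar j * w j) + (\<Sum>i\<in>C-{istar}. u i * (\<Sum>j\<in>C. A0 i j * w j))"
      using sum.remove[OF fin istC] by blast
    also have "(\<Sum>i\<in>C-{istar}. u i * (\<Sum>j\<in>C. A0 i j * w j)) = 0" using rows by (intro sum.neutral) auto
    finally have "(\<Sum>j\<in>C. A0 istar j * w j) = 0" using ust by simp
    then have "\<forall>i\<in>C. (\<Sum>\<tau>\<in>C. pade T (g i) \<tau> * w \<tau>) = 0" using rows by (auto simp: A0_def)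
    then have "(\<forall>j. j \<notin> C \<longrightarrow> w j = 0) \<and> w (\<lambda>_. 0) = 0 \<and> (\<exists>j\<in>C. w j \<noteq> 0) \<and>
             (\<forall>i\<in>C. (\<Sum>\<tau>\<in>C. pade T (g i) \<tau> * w \<tau>) = 0)" using w(1,2) wz unfolding z_def by blast
    then show False using nok by blast
  qed
  define a where "a = (\<lambda>i \<tau>. if i = istar then e0 \<tau> else A0 i \<tau>)"
  define b where "b = (\<lambda>i \<tau>. if i = istar then 0 else B i \<tau>)"
  have Mtab: "Mt t = (\<lambda>i \<tau>. a i \<tau> + t * b i \<tau>)" for t
    by (auto simp: Mt_def At_def a_def b_def fun_eq_iff)
  have "isCont (\<lambda>t. det_on C (\<lambda>i \<tau>. a i \<tau> + t * b i \<tau>)) 0"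
    unfolding det_on_def by (intro continuous_intros)
  then have "isCont (\<lambda>t. det_on C (Mt t)) 0" by (simp add: Mtab)
  then obtain t where t: "t \<noteq> 0" "det_on C (Mt t) \<noteq> 0" using isCont_nonzero M0 by blast
  then have "det_on C (At t) \<noteq> 0" using detrel by simp
  then have "det_on C (\<lambda>\<sigma> \<tau>. pade (\<lambda>\<gamma>. T \<gamma> + t * (if \<gamma> = g istar then 1 else 0)) (g \<sigma>) \<tau>) \<noteq> 0"
    using pade_At[of t] by simp
  then show False using allz by blast
qed

abbreviation zz :: mi where "zz \<equiv> (\<lambda>_. 0)"

lemma MI_finite: "finite (MI n k)"
proof -
  have "MI n k \<subseteq> (\<lambda>f i. if i < n then f i else 0) ` ({..<n} \<rightarrow>\<^sub>E {..k})"
  proof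
    fix \<gamma> assume g: "\<gamma> \<in> MI n k"
    have le: "\<gamma> i \<le> k" if "i < n" for i
    proof -
      have "\<gamma> i \<le> mdeg n \<gamma>" unfolding mdeg_def using that by (intro member_le_sum) auto
      then show ?thesis using g by (simp add: MI_def)
    qed
    have r: "restrict \<gamma> {..<n} \<in> {..<n} \<rightarrow>\<^sub>E {..k}" using le by auto
    have e: "\<gamma> = (\<lambda>i. if i < n then restrict \<gamma> {..<n} i else 0)"
      using g by (auto simp: MI_def fun_eq_iff)
    show "\<gamma> \<in> (\<lambda>f i. if i < n then f i else 0) ` ({..<n} \<rightarrow>\<^sub>E {..k})"
    proof (rule image_eqI[where x="restrict \<gamma> {..<n}"])
      show "\<gamma> = (\<lambda>f i. if i < n then f i else 0) (restrict \<gamma> {..<n})" using e by simp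
    qed (rule r)
  qed
  moreover have "finite ({..<n} \<rightarrow>\<^sub>E {..k})" by (simp add: finite_PiE)
  ultimately show ?thesis using finite_subset by blast
qed

lemma mdeg_Suc: "mdeg (Suc n) \<gamma> = mdeg n \<gamma> + \<gamma> n"
  unfolding mdeg_def by simp

lemma mdeg_upd: "mdeg n (\<gamma>(n := j)) = mdeg n \<gamma>"
  unfolding mdeg_def by (rule sum.cong) auto

lemma MI_card: "card (MI n k) = (k + n choose n)"
proof (induction n arbitrary: k)
  case 0
  have "MI 0 k = {zz}" by (auto simp: MI_def mdeg_def fun_eq_iff)
  then show ?case by simp
next
  case (Suc n)
  define F where "F = (\<lambda>j. (\<lambda>\<gamma>. \<gamma>(n := k - j)) ` MI n j)"
  have eqU: "MI (Suc n) k = (\<Union>j\<in>{..k}. F j)"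
  proof
    show "MI (Suc n) k \<subseteq> (\<Union>j\<in>{..k}. F j)"
    proof
      fix \<gamma> assume g: "\<gamma> \<in> MI (Suc n) k"
      then have s: "\<forall>i\<ge>Suc n. \<gamma> i = 0" "mdeg n \<gamma> + \<gamma> n \<le> k" by (auto simp: MI_def mdeg_Suc)
      define j where "j = k - \<gamma> n"
      have m: "\<gamma>(n := 0) \<in> MI n j"
        unfolding MI_def using s by (auto simp: mdeg_upd j_def)
      have e: "\<gamma> = (\<gamma>(n := 0))(n := k - j)" using s by (auto simp: j_def fun_eq_iff)
      have "\<gamma> \<in> F j" unfolding F_def
      proof (rule image_eqI[where x="\<gamma>(n := 0)"])
        show "\<gamma> = (\<lambda>\<gamma>. \<gamma>(n := k - j)) (\<gamma>(n := 0))" using e by simp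
      qed (rule m)
      moreover have "j \<in> {..k}" by (simp add: j_def)
      ultimately show "\<gamma> \<in> (\<Union>j\<in>{..k}. F j)" by blast
    qed
  next
    show "(\<Union>j\<in>{..k}. F j) \<subseteq> MI (Suc n) k"
    proof
      fix \<gamma> assume "\<gamma> \<in> (\<Union>j\<in>{..k}. F j)"
      then obtain j \<beta> where j: "j \<le> k" "\<beta> \<in> MI n j" "\<gamma> = \<beta>(n := k - j)" unfolding F_def by auto
      have "mdeg (Suc n) \<gamma> = mdeg n \<beta> + (k - j)" using j(3) by (simp add: mdeg_Suc mdeg_upd)
      also have "\<dots> \<le> k"
      proof -
        have "mdeg n \<beta> \<le> j" using j(2) by (simp add: MI_def)
        then show ?thesis using j(1) by arith
      qed
      finally show "\<gamma> \<in> MI (Suc n) k" using j(2,3) by (auto simp: MI_def)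
    qed
  qed
  have injF: "inj_on (\<lambda>\<gamma>. \<gamma>(n := k - j)) (MI n j)" for j
  proof
    fix \<beta> \<beta>' assume b: "\<beta> \<in> MI n j" "\<beta>' \<in> MI n j" "\<beta>(n := k - j) = \<beta>'(n := k - j)"
    show "\<beta> = \<beta>'"
    proof
      fix i show "\<beta> i = \<beta>' i"
      proof (cases "i = n")
        case True then show ?thesis using b(1,2) by (simp add: MI_def)
      next
        case False then show ?thesis using fun_cong[OF b(3), of i] by simp
      qed
    qed
  qed
  have cardF: "card (F j) = (j + n choose n)" for j
    unfolding F_def using card_image[OF injF[of j]] Suc.IH[of j] by simp
  have disj: "F i \<inter> F j = {}" if "i \<in> {..k}" "j \<in> {..k}" "i \<noteq> j" for i j
  proof -
    have "\<gamma> n = k - i" if "\<gamma> \<in> F i" for \<gamma> using that unfolding F_def by auto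
    moreover have "\<gamma> n = k - j" if "\<gamma> \<in> F j" for \<gamma> using that unfolding F_def by auto
    moreover have "k - i \<noteq> k - j" using \<open>i \<in> {..k}\<close> \<open>j \<in> {..k}\<close> \<open>i \<noteq> j\<close> by auto
    ultimately show ?thesis by fastforce
  qed
  have finF: "finite (F j)" for j unfolding F_def using MI_finite by simp
  have "card (MI (Suc n) k) = (\<Sum>j\<in>{..k}. card (F j))"
    unfolding eqU by (rule card_UN_disjoint) (use finF disj in auto)
  also have "\<dots> = (\<Sum>j\<le>k. (n + j choose j))"
    using cardF by (simp add: binomial_symmetric[of n "_ + n", simplified] add.commute)
  also have "\<dots> = Suc (n + k) choose k" by (rule sum_choose_lower)
  also have "\<dots> = (k + Suc n choose Suc n)"
  proof -
    have h: "Suc (n + k) choose k = Suc (n + k) choose (Suc (n + k) - k)" by (rule binomial_symmetric) simp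
    have h2: "Suc (n + k) - k = Suc n" by simp
    have h3: "Suc (n + k) = k + Suc n" by simp
    show ?thesis unfolding h3 using h[unfolded h2, unfolded h3] .
  qed
  finally show ?case .
qed

primrec tay :: "nat \<Rightarrow> nat \<Rightarrow> nat \<Rightarrow> (mi \<Rightarrow> complex) \<Rightarrow> (mi \<Rightarrow> complex) \<Rightarrow> mi \<Rightarrow> complex" where
  "tay n e 0 p q \<gamma> = p \<gamma>"
| "tay n e (Suc k) p q \<gamma> = p \<gamma> - (\<Sum>\<sigma>\<in>{\<sigma>\<in>MI n e. \<sigma> \<noteq> zz \<and> (\<forall>i. \<sigma> i \<le> \<gamma> i)}. q \<sigma> * tay n e k p q (\<lambda>i. \<gamma> i - \<sigma> i))"

lemma mdeg_mono: "(\<And>i. \<sigma> i \<le> \<gamma> i) \<Longrightarrow> mdeg n \<sigma> \<le> mdeg n \<gamma>"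
  unfolding mdeg_def by (rule sum_mono) auto

lemma mdeg_diff: "(\<And>i. \<sigma> i \<le> \<gamma> i) \<Longrightarrow> mdeg n (\<lambda>i. \<gamma> i - \<sigma> i) + mdeg n \<sigma> = mdeg n \<gamma>"
  unfolding mdeg_def by (simp add: sum.distrib[symmetric])

lemma zz_MI: "zz \<in> MI n k"
  by (simp add: MI_def mdeg_def)

lemma tay_correct:
  assumes q0: "q zz = 1"
    and eq: "\<forall>\<gamma>\<in>MI n m. (\<Sum>\<sigma>\<in>{\<sigma>\<in>MI n e. \<forall>i. \<sigma> i \<le> \<gamma> i}. q \<sigma> * c (\<lambda>i. \<gamma> i - \<sigma> i)) = p \<gamma>"
  shows "\<gamma> \<in> MI n m \<Longrightarrow> mdeg n \<gamma> \<le> k \<Longrightarrow> c \<gamma> = tay n e k p q \<gamma>"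
proof (induction k arbitrary: \<gamma>)
  have rec: "c \<gamma> = p \<gamma> - (\<Sum>\<sigma>\<in>{\<sigma>\<in>MI n e. \<sigma> \<noteq> zz \<and> (\<forall>i. \<sigma> i \<le> \<gamma> i)}. q \<sigma> * c (\<lambda>i. \<gamma> i - \<sigma> i))"
    if g: "\<gamma> \<in> MI n m" for \<gamma>
  proof -
    let ?D = "{\<sigma>\<in>MI n e. \<sigma> \<noteq> zz \<and> (\<forall>i. \<sigma> i \<le> \<gamma> i)}"
    have fD: "finite ?D" using MI_finite[of n e] by (rule finite_subset[rotated]) auto
    have seteq: "{\<sigma>\<in>MI n e. \<forall>i. \<sigma> i \<le> \<gamma> i} = insert zz ?D" using zz_MI[of n e] by auto
    have e1: "(\<Sum>\<sigma>\<in>{\<sigma>\<in>MI n e. \<forall>i. \<sigma> i \<le> \<gamma> i}. q \<sigma> * c (\<lambda>i. \<gamma> i - \<sigma> i)) = p \<gamma>"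
      using eq g by blast
    then have "p \<gamma> = (\<Sum>\<sigma>\<in>insert zz ?D. q \<sigma> * c (\<lambda>i. \<gamma> i - \<sigma> i))" unfolding seteq by simp
    also have "\<dots> = q zz * c (\<lambda>i. \<gamma> i - 0) + (\<Sum>\<sigma>\<in>?D. q \<sigma> * c (\<lambda>i. \<gamma> i - \<sigma> i))"
      using fD by (subst sum.insert) auto
    finally show ?thesis using q0 by simp
  qed
  {
    case 0
    have De: "{\<sigma>\<in>MI n e. \<sigma> \<noteq> zz \<and> (\<forall>i. \<sigma> i \<le> \<gamma> i)} = {}"
    proof (rule equals0I)
      fix \<sigma> assume s: "\<sigma> \<in> {\<sigma>\<in>MI n e. \<sigma> \<noteq> zz \<and> (\<forall>i. \<sigma> i \<le> \<gamma> i)}"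
      then have "0 < mdeg n \<sigma>" by (intro mdeg_pos) (auto simp: MI_def)
      moreover have "mdeg n \<sigma> \<le> mdeg n \<gamma>" using s by (intro mdeg_mono) auto
      ultimately show False using 0 by simp
    qed
    show ?case using rec[OF 0(1)] unfolding De by simp
  next
    case (Suc k)
    have "(\<Sum>\<sigma>\<in>{\<sigma>\<in>MI n e. \<sigma> \<noteq> zz \<and> (\<forall>i. \<sigma> i \<le> \<gamma> i)}. q \<sigma> * c (\<lambda>i. \<gamma> i - \<sigma> i)) =
          (\<Sum>\<sigma>\<in>{\<sigma>\<in>MI n e. \<sigma> \<noteq> zz \<and> (\<forall>i. \<sigma> i \<le> \<gamma> i)}. q \<sigma> * tay n e k p q (\<lambda>i. \<gamma> i - \<sigma> i))"
    proof (rule sum.cong[OF refl])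
      fix \<sigma> assume s: "\<sigma> \<in> {\<sigma>\<in>MI n e. \<sigma> \<noteq> zz \<and> (\<forall>i. \<sigma> i \<le> \<gamma> i)}"
      have pos: "0 < mdeg n \<sigma>" using s by (intro mdeg_pos) (auto simp: MI_def)
      have dd: "mdeg n (\<lambda>i. \<gamma> i - \<sigma> i) + mdeg n \<sigma> = mdeg n \<gamma>" using s by (intro mdeg_diff) auto
      have "(\<lambda>i. \<gamma> i - \<sigma> i) \<in> MI n m" using Suc.prems(1) dd by (auto simp: MI_def)
      moreover have "mdeg n (\<lambda>i. \<gamma> i - \<sigma> i) \<le> k" using dd pos Suc.prems(2) by simp
      ultimately show "q \<sigma> * c (\<lambda>i. \<gamma> i - \<sigma> i) = q \<sigma> * tay n e k p q (\<lambda>i. \<gamma> i - \<sigma> i)"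
        using Suc.IH by simp
    qed
    then show ?case using rec[OF Suc.prems(1)] by simp
  }
qed

lemma tay_gp:
  assumes P: "\<And>\<gamma>. gp J 1 (\<lambda>x. P x \<gamma>)" and Q: "\<And>\<sigma>. gp J 1 (\<lambda>x. Q x \<sigma>)"
  shows "gp J (Suc k) (\<lambda>x. tay n e k (P x) (Q x) \<gamma>)"
proof (induction k arbitrary: \<gamma>)
  case 0 then show ?case using P by simp
next
  case (Suc k)
  let ?D = "{\<sigma>\<in>MI n e. \<sigma> \<noteq> zz \<and> (\<forall>i. \<sigma> i \<le> \<gamma> i)}"
  have fD: "finite ?D" using MI_finite[of n e] by (rule finite_subset[rotated]) auto
  have "gp J (Suc (Suc k)) (\<lambda>x. P x \<gamma>)" using gp_mono[OF P[of \<gamma>]] by simp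
  moreover have "gp J (Suc (Suc k)) (\<lambda>x. \<Sum>\<sigma>\<in>?D. Q x \<sigma> * tay n e k (P x) (Q x) (\<lambda>i. \<gamma> i - \<sigma> i))"
  proof (rule gp_sum[OF fD])
    fix \<sigma> show "gp J (Suc (Suc k)) (\<lambda>x. Q x \<sigma> * tay n e k (P x) (Q x) (\<lambda>i. \<gamma> i - \<sigma> i))"
      using gp.gmul[OF Q[of \<sigma>] Suc.IH[of "\<lambda>i. \<gamma> i - \<sigma> i"], of "Suc (Suc k)"] by simp
  qed
  ultimately show ?case using gp_diff by simp
qed

definition Pof :: "nat \<Rightarrow> nat \<Rightarrow> ((mi + mi) option \<Rightarrow> complex) \<Rightarrow> mi \<Rightarrow> complex" where
  "Pof n d x \<gamma> = (if \<gamma> = zz then 1 else if \<gamma> \<in> MI n d then x (Some (Inl \<gamma>)) else 0)"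

definition Qof :: "nat \<Rightarrow> nat \<Rightarrow> mi \<Rightarrow> ((mi + mi) option \<Rightarrow> complex) \<Rightarrow> mi \<Rightarrow> complex" where
  "Qof n e s x \<sigma> = (if \<sigma> = zz then 1 else if \<sigma> \<in> MI n e \<and> \<sigma> \<noteq> s then x (Some (Inr \<sigma>)) else 0)"

definition Phi :: "nat \<Rightarrow> nat \<Rightarrow> nat \<Rightarrow> nat \<Rightarrow> mi \<Rightarrow> ((mi + mi) option \<Rightarrow> complex) \<Rightarrow> mi \<Rightarrow> complex" where
  "Phi n d e m s x \<gamma> = (if \<gamma> \<in> MI n m then x None * tay n e m (Pof n d x) (Qof n e s x) \<gamma> else 0)"

definition Js :: "nat \<Rightarrow> nat \<Rightarrow> nat \<Rightarrow> mi \<Rightarrow> (mi + mi) option set" where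
  "Js n d e s = insert None ((\<lambda>\<gamma>. Some (Inl \<gamma>)) ` (MI n d - {zz}) \<union> (\<lambda>\<sigma>. Some (Inr \<sigma>)) ` (MI n e - {zz, s}))"

lemma Js_finite: "finite (Js n d e s)"
  unfolding Js_def using MI_finite by auto

lemma Js_card:
  assumes s: "s \<in> MI n e" "s \<noteq> zz"
  shows "card (Js n d e s) \<le> (d + n choose n) + (e + n choose n) - 2"
proof -
  have c1: "card ((\<lambda>\<gamma>. Some (Inl \<gamma> :: mi + mi)) ` (MI n d - {zz})) \<le> (d + n choose n) - 1"
  proof -
    have "card ((\<lambda>\<gamma>. Some (Inl \<gamma> :: mi + mi)) ` (MI n d - {zz})) \<le> card (MI n d - {zz})" by (rule card_image_le) (simp add: MI_finite)
    also have "\<dots> = card (MI n d) - 1" using zz_MI MI_finite by (simp add: card_Diff_singleton)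
    finally show ?thesis by (simp add: MI_card)
  qed
  have c2: "card ((\<lambda>\<sigma>. Some (Inr \<sigma> :: mi + mi)) ` (MI n e - {zz, s})) \<le> (e + n choose n) - 2"
  proof -
    have "card ((\<lambda>\<sigma>. Some (Inr \<sigma> :: mi + mi)) ` (MI n e - {zz, s})) \<le> card (MI n e - {zz, s})" by (rule card_image_le) (simp add: MI_finite)
    also have "\<dots> = card (MI n e) - card {zz, s}" using zz_MI s MI_finite by (intro card_Diff_subset) auto
    also have "card {zz, s} = 2" using s(2) by simp
    finally show ?thesis by (simp add: MI_card)
  qed
  have ge: "2 \<le> (e + n choose n)"
  proof -
    have "{zz, s} \<subseteq> MI n e" using zz_MI s by auto
    then have "card {zz, s} \<le> card (MI n e)" using MI_finite by (intro card_mono) auto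
    then show ?thesis using s(2) by (simp add: MI_card)
  qed
  have "0 < (d + n choose n)" by (simp add: zero_less_binomial_iff)
  then have ge1: "1 \<le> (d + n choose n)" by linarith
  have "card (Js n d e s) \<le> Suc (card ((\<lambda>\<gamma>. Some (Inl \<gamma> :: mi + mi)) ` (MI n d - {zz}) \<union> (\<lambda>\<sigma>. Some (Inr \<sigma> :: mi + mi)) ` (MI n e - {zz, s})))"
    unfolding Js_def using MI_finite[of n d] MI_finite[of n e] by (simp add: card_insert_if)
  also have "\<dots> \<le> Suc (card ((\<lambda>\<gamma>. Some (Inl \<gamma> :: mi + mi)) ` (MI n d - {zz})) + card ((\<lambda>\<sigma>. Some (Inr \<sigma> :: mi + mi)) ` (MI n e - {zz, s})))"
    using card_Un_le[of "(\<lambda>\<gamma>. Some (Inl \<gamma> :: mi + mi)) ` (MI n d - {zz})" "(\<lambda>\<sigma>. Some (Inr \<sigma> :: mi + mi)) ` (MI n e - {zz, s})"] by simp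
  finally show ?thesis using c1 c2 ge ge1 by linarith
qed

lemma Pof_gp: "gp (Js n d e s) 1 (\<lambda>x. Pof n d x \<gamma>)"
proof (cases "\<gamma> = zz")
  case True then show ?thesis unfolding Pof_def by (simp add: gp.gconst)
next
  case False
  show ?thesis
  proof (cases "\<gamma> \<in> MI n d")
    case True
    have "Some (Inl \<gamma>) \<in> Js n d e s" using True False unfolding Js_def by blast
    then show ?thesis using False True gp.gvar[of "Some (Inl \<gamma>)" "Js n d e s" 1] unfolding Pof_def by simp
  next
    case F2: False
    then show ?thesis using False unfolding Pof_def by (simp add: gp.gconst)
  qed
qed

lemma Qof_gp: "gp (Js n d e s) 1 (\<lambda>x. Qof n e s x \<sigma>)"
proof (cases "\<sigma> = zz")
  case True then show ?thesis unfolding Qof_def by (simp add: gp.gconst)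
next
  case False
  show ?thesis
  proof (cases "\<sigma> \<in> MI n e \<and> \<sigma> \<noteq> s")
    case True
    have "Some (Inr \<sigma>) \<in> Js n d e s" using True False unfolding Js_def by blast
    then show ?thesis using False True gp.gvar[of "Some (Inr \<sigma>)" "Js n d e s" 1] unfolding Qof_def by simp
  next
    case F2: False
    have "(\<lambda>x. Qof n e s x \<sigma>) = (\<lambda>x. 0)"
      by (rule ext) (simp only: Qof_def if_not_P[OF False] if_not_P[OF F2])
    then show ?thesis using gp.gconst[of "Js n d e s" 1 0] by simp
  qed
qed

lemma Phi_gp: "gp (Js n d e s) (m+2) (\<lambda>x. Phi n d e m s x \<gamma>)"
proof (cases "\<gamma> \<in> MI n m")
  case True
  have v: "gp (Js n d e s) 1 (\<lambda>x. x None)" by (rule gp.gvar) (auto simp: Js_def)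
  have t: "gp (Js n d e s) (Suc m) (\<lambda>x. tay n e m (Pof n d x) (Qof n e s x) \<gamma>)"
    by (rule tay_gp[OF Pof_gp Qof_gp])
  show ?thesis using gp.gmul[OF v t, of "m+2"] True unfolding Phi_def by simp
next
  case False then show ?thesis unfolding Phi_def by (simp add: gp.gconst)
qed

lemma Phi_amb: "Phi n d e m s x \<in> amb (MI n m)"
  by (simp add: amb_def Phi_def)

lemma S_zz: "{\<sigma>\<in>MI n e. \<forall>i. \<sigma> i \<le> zz i} = {zz}"
proof
  show "{\<sigma>\<in>MI n e. \<forall>i. \<sigma> i \<le> zz i} \<subseteq> {zz}"
  proof
    fix \<sigma> assume "\<sigma> \<in> {\<sigma>\<in>MI n e. \<forall>i. \<sigma> i \<le> zz i}"
    then have "\<sigma> i = 0" for i by simp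
    then have "\<sigma> = zz" by (simp add: fun_eq_iff)
    then show "\<sigma> \<in> {zz}" by simp
  qed
  show "{zz} \<subseteq> {\<sigma>\<in>MI n e. \<forall>i. \<sigma> i \<le> zz i}" using zz_MI by simp
qed

lemma cover:
  assumes order: "bij_betw g (MI n e) (MIrange n (d + 1) m)"
    and ker: "\<And>T. \<exists>w. (\<forall>j. j \<notin> MI n e \<longrightarrow> w j = 0) \<and> w zz = 0 \<and> (\<exists>j\<in>MI n e. w j \<noteq> 0) \<and>
                  (\<forall>i\<in>MI n e. (\<Sum>\<tau>\<in>MI n e. pade T (g i) \<tau> * w \<tau>) = 0)"
  shows "taylor_cone n d e m \<subseteq> (\<Union>s\<in>MI n e - {zz}. range (Phi n d e m s))"
proof
  fix c assume "c \<in> taylor_cone n d e m"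
  then obtain t a where t: "t \<in> taylor_image n d e m" and c: "c = (\<lambda>\<gamma>. a * t \<gamma>)"
    unfolding taylor_cone_def by blast
  from t obtain p q where pq: "p zz = 1" "q zz = 1" "\<forall>\<gamma>. \<gamma> \<notin> MI n d \<longrightarrow> p \<gamma> = 0"
      "\<forall>\<gamma>. \<gamma> \<notin> MI n e \<longrightarrow> q \<gamma> = 0" "\<forall>\<gamma>. \<gamma> \<notin> MI n m \<longrightarrow> t \<gamma> = 0"
    and eq: "\<forall>\<gamma>\<in>MI n m. (\<Sum>\<sigma>\<in>{\<sigma>\<in>MI n e. \<forall>i. \<sigma> i \<le> \<gamma> i}. q \<sigma> * t (\<lambda>i. \<gamma> i - \<sigma> i)) = p \<gamma>"
    unfolding taylor_image_def by blast
  from ker[of t] obtain w where w: "\<forall>j. j \<notin> MI n e \<longrightarrow> w j = 0" "w zz = 0" "\<exists>j\<in>MI n e. w j \<noteq> 0"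
    "\<forall>i\<in>MI n e. (\<Sum>\<tau>\<in>MI n e. pade t (g i) \<tau> * w \<tau>) = 0" by blast
  from w(3) obtain s where s: "s \<in> MI n e" "w s \<noteq> 0" by blast
  have snz: "s \<noteq> zz" using s(2) w(2) by metis
  define lam where "lam = q s / w s"
  define q' where "q' = (\<lambda>\<sigma>. q \<sigma> - lam * w \<sigma>)"
  define S where "S = (\<lambda>\<gamma>::mi. {\<sigma>\<in>MI n e. \<forall>i. \<sigma> i \<le> \<gamma> i})"
  define p' where "p' = (\<lambda>\<gamma>. if \<gamma> \<in> MI n d then (\<Sum>\<sigma>\<in>S \<gamma>. q' \<sigma> * t (\<lambda>i. \<gamma> i - \<sigma> i)) else 0)"
  have q'z: "q' zz = 1" using pq(2) w(2) by (simp add: q'_def)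
  have q's: "q' s = 0" using s(2) by (simp add: q'_def lam_def)
  have q'supp: "q' \<sigma> = 0" if "\<sigma> \<notin> MI n e" for \<sigma> using that pq(4) w(1) by (simp add: q'_def)
  have finS: "finite (S \<gamma>)" for \<gamma> unfolding S_def using MI_finite[of n e] by simp
  have eq': "\<forall>\<gamma>\<in>MI n m. (\<Sum>\<sigma>\<in>S \<gamma>. q' \<sigma> * t (\<lambda>i. \<gamma> i - \<sigma> i)) = p' \<gamma>"
  proof
    fix \<gamma> assume \<gamma>: "\<gamma> \<in> MI n m"
    show "(\<Sum>\<sigma>\<in>S \<gamma>. q' \<sigma> * t (\<lambda>i. \<gamma> i - \<sigma> i)) = p' \<gamma>"
    proof (cases "\<gamma> \<in> MI n d")
      case True then show ?thesis by (simp add: p'_def)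
    next
      case False
      have p0: "p \<gamma> = 0" using pq(3) False by blast
      have "\<gamma> \<in> MIrange n (d+1) m" using \<gamma> False by (auto simp: MI_def MIrange_def)
      then have "\<gamma> \<in> g ` MI n e" using order unfolding bij_betw_def by simp
      then obtain i where i: "i \<in> MI n e" "\<gamma> = g i" by blast
      have k0: "(\<Sum>\<tau>\<in>MI n e. pade t \<gamma> \<tau> * w \<tau>) = 0" using w(4) i by simp
      have "(\<Sum>\<sigma>\<in>S \<gamma>. w \<sigma> * t (\<lambda>i. \<gamma> i - \<sigma> i)) =
            (\<Sum>\<tau>\<in>MI n e. if (\<forall>i. \<tau> i \<le> \<gamma> i) then w \<tau> * t (\<lambda>i. \<gamma> i - \<tau> i) else 0)"
        unfolding S_def by (rule sum.inter_filter[OF MI_finite])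
      also have "\<dots> = (\<Sum>\<tau>\<in>MI n e. pade t \<gamma> \<tau> * w \<tau>)"
        by (rule sum.cong[OF refl]) (simp add: pade_def)
      finally have ws: "(\<Sum>\<sigma>\<in>S \<gamma>. w \<sigma> * t (\<lambda>i. \<gamma> i - \<sigma> i)) = 0" using k0 by simp
      have "(\<Sum>\<sigma>\<in>S \<gamma>. q' \<sigma> * t (\<lambda>i. \<gamma> i - \<sigma> i)) =
            (\<Sum>\<sigma>\<in>S \<gamma>. q \<sigma> * t (\<lambda>i. \<gamma> i - \<sigma> i)) - lam * (\<Sum>\<sigma>\<in>S \<gamma>. w \<sigma> * t (\<lambda>i. \<gamma> i - \<sigma> i))"
        by (simp add: q'_def left_diff_distrib sum_subtractf sum_distrib_left mult.assoc)
      also have "(\<Sum>\<sigma>\<in>S \<gamma>. q \<sigma> * t (\<lambda>i. \<gamma> i - \<sigma> i)) = p \<gamma>" using eq \<gamma> by (simp add: S_def)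
      finally show ?thesis using p0 ws False by (simp add: p'_def)
    qed
  qed
  have Szz: "S zz = {zz}" unfolding S_def by (rule S_zz)
  have tz: "t zz = 1"
  proof -
    have "(\<Sum>\<sigma>\<in>{\<sigma>\<in>MI n e. \<forall>i. \<sigma> i \<le> zz i}. q \<sigma> * t (\<lambda>i. zz i - \<sigma> i)) = p zz"
      using bspec[OF eq zz_MI[of n m]] by simp
    then show ?thesis unfolding S_zz using pq(1,2) by simp
  qed
  have p'z: "p' zz = 1" using Szz q'z tz zz_MI[of n d] by (simp add: p'_def)
  define x where "x = (\<lambda>opt. case opt of None \<Rightarrow> a | Some (Inl \<gamma>) \<Rightarrow> p' \<gamma> | Some (Inr \<sigma>) \<Rightarrow> q' \<sigma>)"
  have Px: "Pof n d x = p'"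
  proof
    fix \<gamma> show "Pof n d x \<gamma> = p' \<gamma>"
      using p'z by (cases "\<gamma> = zz") (auto simp: Pof_def x_def p'_def)
  qed
  have Qx: "Qof n e s x = q'"
  proof
    fix \<sigma> show "Qof n e s x \<sigma> = q' \<sigma>"
    proof (cases "\<sigma> = zz")
      case True then show ?thesis using q'z by (simp add: Qof_def)
    next
      case False
      then show ?thesis using q's q'supp by (cases "\<sigma> = s") (auto simp: Qof_def x_def)
    qed
  qed
  have tt: "t \<gamma> = tay n e m p' q' \<gamma>" if "\<gamma> \<in> MI n m" for \<gamma>
    using tay_correct[where q=q' and n=n and m=m and e=e and c=t and p=p' and k=m and \<gamma>=\<gamma>] q'z eq' that
    by (simp add: S_def MI_def)
  have xN: "x None = a" by (simp add: x_def)
  have "c = Phi n d e m s x"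
  proof
    fix \<gamma> show "c \<gamma> = Phi n d e m s x \<gamma>"
      using tt pq(5) xN by (cases "\<gamma> \<in> MI n m") (simp_all add: c Phi_def Px Qx)
  qed
  then show "c \<in> (\<Union>s\<in>MI n e - {zz}. range (Phi n d e m s))" using s(1) snz by blast
qed

theorem proposition4p1:
  fixes n d e m :: nat and g :: "mi \<Rightarrow> mi"
  assumes square: "(m + n choose n) - (d + n choose n) = (e + n choose n)"
    and nondefective: "taylor_dim n d e m = enat (expected_dim n d e m)"
    and hypersurface: "taylor_dim n d e m = enat (bigN n m - 1)"
    and order: "bij_betw g (MI n e) (MIrange n (d + 1) m)"
  shows "\<exists>c :: mi \<Rightarrow> complex. det_on (MI n e) (\<lambda>\<sigma> \<tau>. pade c (g \<sigma>) \<tau>) \<noteq> 0"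
proof (rule ccontr)
  assume H: "\<not> (\<exists>c :: mi \<Rightarrow> complex. det_on (MI n e) (\<lambda>\<sigma> \<tau>. pade c (g \<sigma>) \<tau>) \<noteq> 0)"
  then have allz: "\<And>c. det_on (MI n e) (\<lambda>\<sigma> \<tau>. pade c (g \<sigma>) \<tau>) = 0" by blast
  have inj: "inj_on g (MI n e)" by (rule bij_betw_imp_inj_on[OF order])
  have supp: "\<And>\<tau> k. \<tau> \<in> MI n e \<Longrightarrow> n \<le> k \<Longrightarrow> \<tau> k = 0" by (simp add: MI_def)
  have ker: "\<And>T. \<exists>w. (\<forall>j. j \<notin> MI n e \<longrightarrow> w j = 0) \<and> w zz = 0 \<and> (\<exists>j\<in>MI n e. w j \<noteq> 0) \<and>
                  (\<forall>i\<in>MI n e. (\<Sum>\<tau>\<in>MI n e. pade T (g i) \<tau> * w \<tau>) = 0)"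
    apply (rule LA_main[where n=n and g=g and C="MI n e"])
        apply (rule MI_finite)
       apply (rule zz_MI)
      apply (simp add: MI_def)
     apply (rule inj)
    apply (rule allz)
    done
  have cov: "taylor_cone n d e m \<subseteq> (\<Union>s\<in>MI n e - {zz}. range (Phi n d e m s))"
    by (rule cover[OF order ker])
  from ker[of "\<lambda>_. 0"] obtain w0 where w0all: "(\<forall>j. j \<notin> MI n e \<longrightarrow> w0 j = 0) \<and> w0 zz = 0 \<and> (\<exists>j\<in>MI n e. w0 j \<noteq> 0) \<and>
                  (\<forall>i\<in>MI n e. (\<Sum>\<tau>\<in>MI n e. pade (\<lambda>_. 0) (g i) \<tau> * w0 \<tau>) = 0)" ..
  have w0: "w0 zz = 0" "\<exists>j\<in>MI n e. w0 j \<noteq> 0"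
    using conjunct1[OF conjunct2[OF w0all]] conjunct1[OF conjunct2[OF conjunct2[OF w0all]]] by simp_all
  then obtain s0 where s0: "s0 \<in> MI n e" "w0 s0 \<noteq> 0" by blast
  have s0z: "s0 \<noteq> zz" using s0(2) w0(1) by metis
  define D where "D = (d + n choose n)"
  define E where "E = (e + n choose n)"
  define r where "r = D + E - 2"
  have E2: "2 \<le> E"
  proof -
    have "{zz, s0} \<subseteq> MI n e" using zz_MI s0 by auto
    then have "card {zz, s0} \<le> card (MI n e)" using MI_finite by (intro card_mono) auto
    then show ?thesis using s0z by (simp add: MI_card E_def)
  qed
  have "0 < D" unfolding D_def by (simp add: zero_less_binomial_iff)
  then have D1: "1 \<le> D" by linarith
  have cardJ: "finite (Js n d e s) \<and> card (Js n d e s) \<le> r" if "s \<in> MI n e - {zz}" for s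
    using Js_finite Js_card[of s n e d] that by (simp add: r_def D_def E_def)
  have zb: "zdim (MI n m) (zclosure (MI n m) (taylor_cone n d e m)) \<le> enat r"
  proof (rule zdim_union_bound[where F = "MI n e - {zz}" and J = "Js n d e" and \<Phi> = "Phi n d e m" and \<delta> = "m+2"])
    show "finite (MI n e - {zz})" using MI_finite by simp
    show "\<And>s. s \<in> MI n e - {zz} \<Longrightarrow> finite (Js n d e s) \<and> card (Js n d e s) \<le> r" by (rule cardJ)
    show "\<And>s x. s \<in> MI n e - {zz} \<Longrightarrow> Phi n d e m s x \<in> amb (MI n m)" by (rule Phi_amb)
    show "\<And>s \<gamma>. s \<in> MI n e - {zz} \<Longrightarrow> \<gamma> \<in> MI n m \<Longrightarrow> gp (Js n d e s) (m + 2) (\<lambda>x. Phi n d e m s x \<gamma>)"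
      by (rule Phi_gp)
    show "taylor_cone n d e m \<subseteq> (\<Union>s\<in>MI n e - {zz}. range (Phi n d e m s))" by (rule cov)
  qed
  have sq: "(m + n choose n) = D + E" using square E2 unfolding D_def E_def by linarith
  have "bigN n m - 1 = r" unfolding bigN_def r_def using sq by simp
  then have td: "zdim (MI n m) (zclosure (MI n m) (taylor_cone n d e m)) - 1 = enat r"
    using hypersurface unfolding taylor_dim_def by simp
  have r1: "1 \<le> r" using D1 E2 by (simp add: r_def)
  show False
  proof (cases "zdim (MI n m) (zclosure (MI n m) (taylor_cone n d e m))")
    case (enat z)
    then have "z \<le> r" "z - 1 = r" using zb td by (auto simp: one_enat_def)
    then show False using r1 by linarith
  next
    case infinity
    then show False using zb by simp
  qed
qed

end
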